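(* Let $q_1\ge1$, let $c_1,\dots,c_{q_1}\in\mathcal{D}'$ be deterministic distributions, let $\xi=(\xi_1,\dots,\xi_m)$ be an $m$-dimensional white noise on $U$, and let $\rho_1,\dots,\rho_{q_1}\in\mathbb{R}^m$ (rows $\rho_k=(\rho_{k1},\dots,\rho_{km})$). Let $(v_1,\dots,v_{q_1})$ be the generalised process solution of the algebraic block $N_1\dot v+v=c+R\xi$, where $N_1$ is the $q_1\times q_1$ matrix with ones on the superdiagonal and zeros elsewhere and $R$ is the $q_1\times m$ matrix with rows $\rho_k$; i.e. for every $\phi\in\mathcal{D}$, $$\langle v_j,\phi\rangle=\sum_{k=j}^{q_1}\Big\langle c_k+\sum_{\ell=1}^m\rho_{k\ell}\xi_\ell,\ \phi^{(k-j)}\Big\rangle,\quad j=1,\dots,q_1.$$ Let $r$ be the greatest index such that $\|\rho_r\|\ne0$, and fix $\phi\in\mathcal{E}(q_1)$. Then $\langle(v_1,\dots,v_r),\phi\rangle$ is a Gaussian random vector whose law is absolutely continuous with respect to Lebesgue measure on $\mathbb{R}^r$, and $\langle(v_{r+1},\dots,v_{q_1}),\phi\rangle$ is degenerate (almost surely equal to a constant vector).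
   Context: $U=]0,+\infty[$, $\mathcal{D}=C_c^\infty(U)$, $\mathcal{D}'$ its dual. A one-dimensional white noise $\xi$ is a random distribution such that $\langle\xi,\phi\rangle$, $\phi\in\mathcal{D}$, are jointly centred Gaussian with $E[\langle\xi,\phi\rangle\langle\xi,\psi\rangle]=\int_0^\infty\phi\psi$; an $m$-dimensional white noise has independent such components. Derivatives: $\langle\xi^{(k)},\phi\rangle=(-1)^k\langle\xi,\phi^{(k)}\rangle$. $\mathcal{E}(k)$ denotes the set of test functions $\phi$ such that the covariance matrix of $\big(\langle\xi,\phi\rangle,\langle\dot\xi,\phi\rangle,\dots,\langle\xi^{(k-1)},\phi\rangle\big)$ for a one-dimensional white noise $\xi$ is nonsingular (equivalently, the corresponding covariance for an $m$-dimensional white noise, whose $(i,j)$ $m\times m$ block is $\mathrm{Re}[(-1)^{|i-j|/2}]\,\|\phi^{((i+j)/2)}\|^2 I_m$, is nonsingular). $\|\cdot\|$ is the Euclidean norm. *)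

theory Defs
  imports "HOL-Probability.Probability"
begin

text \<open>Test functions: smooth real functions with compact support inside U = ]0,+inf[.
  (Extended by zero to the whole real line.)  k-th derivative: (deriv ^^ k) phi.\<close>

definition test_fun :: "(real \<Rightarrow> real) \<Rightarrow> bool" where
  "test_fun \<phi> \<longleftrightarrow>
     (\<forall>k x. ((deriv ^^ k) \<phi>) differentiable (at x)) \<and>
     (\<exists>a b. 0 < a \<and> a \<le> b \<and> (\<forall>x. x \<notin> {a..b} \<longrightarrow> \<phi> x = 0))"

definition is_distribution :: "((real \<Rightarrow> real) \<Rightarrow> real) \<Rightarrow> bool" where
  "is_distribution T \<longleftrightarrow>
     (\<forall>\<phi> \<psi> s t. test_fun \<phi> \<longrightarrow> test_fun \<psi> \<longrightarrow>
         T (\<lambda>x. s * \<phi> x + t * \<psi> x) = s * T \<phi> + t * T \<psi>) \<and>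
     (\<forall>a b. 0 < a \<longrightarrow> (\<exists>C N. \<forall>\<phi>. test_fun \<phi> \<longrightarrow> (\<forall>x. x \<notin> {a..b} \<longrightarrow> \<phi> x = 0) \<longrightarrow>
         \<bar>T \<phi>\<bar> \<le> C * (\<Sum>k\<le>N. Sup (range (\<lambda>x. \<bar>(deriv ^^ k) \<phi> x\<bar>)))))"

definition centred_gaussian :: "'a measure \<Rightarrow> ('a \<Rightarrow> real) \<Rightarrow> real \<Rightarrow> bool" where
  "centred_gaussian M X s \<longleftrightarrow> X \<in> borel_measurable M \<and> 0 \<le> s \<and>
     distr M borel X = (if s = 0 then return borel 0 else density lborel (normal_density 0 (sqrt s)))"

definition gaussian_rv :: "'a measure \<Rightarrow> ('a \<Rightarrow> real) \<Rightarrow> bool" where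
  "gaussian_rv M X \<longleftrightarrow> X \<in> borel_measurable M \<and>
     (\<exists>\<mu> \<sigma>. 0 \<le> \<sigma> \<and>
        distr M borel X = (if \<sigma> = 0 then return borel \<mu> else density lborel (normal_density \<mu> \<sigma>)))"

definition gaussian_vector :: "'a measure \<Rightarrow> ('i \<Rightarrow> 'a \<Rightarrow> real) \<Rightarrow> 'i set \<Rightarrow> bool" where
  "gaussian_vector M X I \<longleftrightarrow>
     (\<forall>c :: 'i \<Rightarrow> real. gaussian_rv M (\<lambda>\<omega>. \<Sum>i\<in>I. c i * X i \<omega>))"

text \<open>One-dimensional white noise on U: a random distribution whose values on test functions
  are jointly centred Gaussian with covariance  E[<xi,phi><xi,psi>] = int_0^inf phi psi
  (joint Gaussianity: every finite linear combination is centred Gaussian with the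
  variance prescribed by the covariance).\<close>

definition white_noise :: "'a measure \<Rightarrow> ('a \<Rightarrow> (real \<Rightarrow> real) \<Rightarrow> real) \<Rightarrow> bool" where
  "white_noise M \<xi> \<longleftrightarrow>
     (\<forall>\<omega>\<in>space M. is_distribution (\<xi> \<omega>)) \<and>
     (\<forall>\<phi>. test_fun \<phi> \<longrightarrow> (\<lambda>\<omega>. \<xi> \<omega> \<phi>) \<in> borel_measurable M) \<and>
     (\<forall>(\<phi>s :: (real \<Rightarrow> real) list) (cs :: real list).
        length cs = length \<phi>s \<longrightarrow> (\<forall>\<phi>\<in>set \<phi>s. test_fun \<phi>) \<longrightarrow>
        centred_gaussian M (\<lambda>\<omega>. \<Sum>i<length \<phi>s. cs ! i * \<xi> \<omega> (\<phi>s ! i))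
          (\<Sum>i<length \<phi>s. \<Sum>j<length \<phi>s.
              cs ! i * cs ! j * integral {0<..} (\<lambda>x. (\<phi>s ! i) x * (\<phi>s ! j) x)))"

text \<open>m-dimensional white noise (components indexed 1..m): independent one-dimensional
  white noises (independence of the random distributions, viewed as random elements of
  the product space of their values on all test functions).\<close>

definition white_noise_m :: "'a measure \<Rightarrow> nat \<Rightarrow> (nat \<Rightarrow> 'a \<Rightarrow> (real \<Rightarrow> real) \<Rightarrow> real) \<Rightarrow> bool" where
  "white_noise_m M m \<xi> \<longleftrightarrow>
     (\<forall>l\<in>{1..m}. white_noise M (\<xi> l)) \<and>
     prob_space.indep_vars M (\<lambda>_. Pi\<^sub>M {\<phi>. test_fun \<phi>} (\<lambda>_. borel))
        (\<lambda>l \<omega>. restrict (\<xi> l \<omega>) {\<phi>. test_fun \<phi>}) {1..m}"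

text \<open>The set E(k): test functions phi for which the covariance matrix of
  (<xi,phi>, <xi',phi>, ..., <xi^(k-1),phi>) for a one-dimensional white noise is nonsingular.
  Its (i,j) entry is E[<xi^(i),phi><xi^(j),phi>] = (-1)^(i+j) int_0^inf phi^(i) phi^(j).\<close>

definition cov_deriv :: "(real \<Rightarrow> real) \<Rightarrow> nat \<Rightarrow> nat \<Rightarrow> real" where
  "cov_deriv \<phi> i j = (-1) ^ (i + j) * integral {0<..} (\<lambda>x. (deriv ^^ i) \<phi> x * (deriv ^^ j) \<phi> x)"

definition E_set :: "nat \<Rightarrow> (real \<Rightarrow> real) set" where
  "E_set k = {\<phi>. test_fun \<phi> \<and>
     (\<forall>a :: nat \<Rightarrow> real. (\<forall>i<k. (\<Sum>j<k. cov_deriv \<phi> i j * a j) = 0) \<longrightarrow> (\<forall>j<k. a j = 0))}"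

end

theory Submission
  imports Defs
begin

definition gauss :: "real \<Rightarrow> real \<Rightarrow> real measure" where
  "gauss a q = (if q = 0 then return borel a else density lborel (normal_density a (sqrt q)))"

lemma sets_gauss[simp, measurable_cong]: "sets (gauss a q) = sets borel"
  by (simp add: gauss_def)

lemma space_gauss[simp]: "space (gauss a q) = UNIV"
  by (simp add: gauss_def)

lemma real_distribution_gauss: "0 \<le> q \<Longrightarrow> real_distribution (gauss a q)"
proof (cases "q = 0")
  case True then show ?thesis
    by (simp add: gauss_def real_distribution_def real_distribution_axioms_def prob_space_return)
next
  case False
  assume "0 \<le> q"
  with False have "0 < sqrt q" by simp
  then show ?thesis using False
    by (simp add: gauss_def real_distribution_def real_distribution_axioms_def prob_space_normal_density)
qed

lemma char_std_normal_at: "char std_normal_distribution t = complex_of_real (exp (- (t^2) / 2))"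
  by (simp add: char_std_normal_distribution)

lemma char_normal_density:
  assumes "0 < s"
  shows "char (density lborel (normal_density a s)) t = iexp (t * a) * complex_of_real (exp (- ((s * t)^2) / 2))"
proof -
  interpret S: prob_space std_normal_distribution
    by (simp add: prob_space_normal_density)
  have d0: "distributed std_normal_distribution lborel (\<lambda>x. x) (normal_density 0 1)"
    unfolding distributed_def
    by (auto simp: distr_id2)
  have "distributed std_normal_distribution lborel (\<lambda>x. a + s * x) (normal_density (a + s * 0) (\<bar>s\<bar> * 1))"
    by (rule S.normal_density_affine[OF d0]) (use assms in auto)
  then have D: "distr std_normal_distribution lborel (\<lambda>x. a + s * x) = density lborel (normal_density a s)"
    using assms by (simp add: distributed_def)
  have "char (density lborel (normal_density a s)) t = (CLINT x|std_normal_distribution. iexp (t * (a + s * x)))"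
    unfolding char_def D[symmetric]
    by (subst integral_distr) auto
  also have "\<dots> = (CLINT x|std_normal_distribution. iexp (t * a) * iexp ((s * t) * x))"
    by (rule Bochner_Integration.integral_cong) (auto simp: algebra_simps exp_add[symmetric])
  also have "\<dots> = iexp (t * a) * char std_normal_distribution (s * t)"
    unfolding char_def by simp
  finally show ?thesis by (simp add: char_std_normal_at)
qed

lemma char_gauss:
  assumes "0 \<le> q"
  shows "char (gauss a q) t = iexp (t * a) * complex_of_real (exp (- q * t^2 / 2))"
proof (cases "q = 0")
  case True
  then show ?thesis
    by (simp add: gauss_def char_def integral_return)
next
  case False
  with assms have "0 < sqrt q" by simp
  then show ?thesis using False assms
    by (simp add: gauss_def char_normal_density power_mult_distrib)
qed

lemma (in prob_space) distr_eq_gauss: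
  assumes X: "X \<in> borel_measurable M" and q: "0 \<le> q"
    and ch: "\<And>t. char (distr M borel X) t = iexp (t * a) * complex_of_real (exp (- q * t^2 / 2))"
  shows "distr M borel X = gauss a q"
  apply (rule Levy_uniqueness)
  using X q apply (auto intro: real_distribution_gauss)[2]
  using ch char_gauss[OF q] by auto


lemma char_const_zero:
  assumes "finite_measure M"
  shows "char M 0 = complex_of_real (measure M (space M))"
  by (simp add: char_def scaleR_conv_of_real)

lemma finite_char_unique:
  fixes M1 M2 :: "real measure"
  assumes f1: "finite_measure M1" and f2: "finite_measure M2"
    and s1: "sets M1 = sets borel" and s2: "sets M2 = sets borel" and ch: "char M1 = char M2"
  shows "M1 = M2"
proof -
  interpret F1: finite_measure M1 by fact
  interpret F2: finite_measure M2 by fact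
  have sp1: "space M1 = UNIV" using sets_eq_imp_space_eq[OF s1] by simp
  have sp2: "space M2 = UNIV" using sets_eq_imp_space_eq[OF s2] by simp
  define c where "c = measure M1 UNIV"
  have c2: "measure M2 UNIV = c"
    using char_const_zero[OF f1] char_const_zero[OF f2] ch sp1 sp2 c_def by simp
  have c0: "c \<ge> 0" unfolding c_def by simp
  show ?thesis
  proof (cases "c = 0")
    case True
    show ?thesis
    proof (rule measure_eqI)
      show "sets M1 = sets M2" using s1 s2 by simp
      fix A assume A: "A \<in> sets M1"
      have "emeasure M1 A \<le> emeasure M1 UNIV"
        using A sp1 by (metis emeasure_space)
      also have "\<dots> = 0" using True c_def F1.emeasure_eq_measure by simp
      finally have "emeasure M1 A = 0" by simp
      moreover have "emeasure M2 A \<le> emeasure M2 UNIV"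
        using A s1 s2 sp2 by (metis emeasure_space)
      moreover have "emeasure M2 UNIV = 0" using True c2 F2.emeasure_eq_measure by simp
      ultimately show "emeasure M1 A = emeasure M2 A" by simp
    qed
  next
    case False
    with c0 have cpos: "c > 0" by simp
    define D1 where "D1 = density M1 (\<lambda>_. ennreal (1/c))"
    define D2 where "D2 = density M2 (\<lambda>_. ennreal (1/c))"
    have eD1: "emeasure D1 A = ennreal (1/c) * emeasure M1 A" if "A \<in> sets M1" for A
      unfolding D1_def using that by (simp add: emeasure_density nn_integral_cmult_indicator)
    have eD2: "emeasure D2 A = ennreal (1/c) * emeasure M2 A" if "A \<in> sets M2" for A
      unfolding D2_def using that by (simp add: emeasure_density nn_integral_cmult_indicator)
    have rd1: "real_distribution D1"
      unfolding real_distribution_def real_distribution_axioms_def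
    proof
      show "prob_space D1"
      proof
        have "emeasure D1 (space D1) = ennreal (1/c) * emeasure M1 (space M1)"
          using eD1[OF sets.top] by (simp add: D1_def)
        also have "\<dots> = ennreal (1/c) * emeasure M1 UNIV" using sp1 by simp
        also have "\<dots> = ennreal (1/c) * ennreal c" using c_def F1.emeasure_eq_measure by simp
        also have "\<dots> = ennreal (1/c * c)" by (rule ennreal_mult[symmetric]) (use cpos in auto)
        also have "\<dots> = 1" using cpos by simp
        finally show "emeasure D1 (space D1) = 1" .
      qed
      show "sets D1 = sets borel" using s1 by (simp add: D1_def)
    qed
    have rd2: "real_distribution D2"
      unfolding real_distribution_def real_distribution_axioms_def
    proof
      show "prob_space D2"
      proof
        have "emeasure D2 (space D2) = ennreal (1/c) * emeasure M2 (space M2)"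
          using eD2[OF sets.top] by (simp add: D2_def)
        also have "\<dots> = ennreal (1/c) * emeasure M2 UNIV" using sp2 by simp
        also have "\<dots> = ennreal (1/c) * ennreal c" using c2 F2.emeasure_eq_measure by simp
        also have "\<dots> = ennreal (1/c * c)" by (rule ennreal_mult[symmetric]) (use cpos in auto)
        also have "\<dots> = 1" using cpos by simp
        finally show "emeasure D2 (space D2) = 1" .
      qed
      show "sets D2 = sets borel" using s2 by (simp add: D2_def)
    qed
    have chD1: "char D1 t = (1/c) *\<^sub>R char M1 t" for t
    proof -
      have m: "(\<lambda>x. iexp (t * x)) \<in> borel_measurable M1"
        unfolding measurable_cong_sets[OF s1 refl] by measurable
      have "char D1 t = (CLINT x|M1. (1/c) *\<^sub>R iexp (t * x))"
        unfolding D1_def char_def by (rule integral_density) (use m cpos in auto)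
      then show ?thesis by (simp add: char_def)
    qed
    have chD2: "char D2 t = (1/c) *\<^sub>R char M2 t" for t
    proof -
      have m: "(\<lambda>x. iexp (t * x)) \<in> borel_measurable M2"
        unfolding measurable_cong_sets[OF s2 refl] by measurable
      have "char D2 t = (CLINT x|M2. (1/c) *\<^sub>R iexp (t * x))"
        unfolding D2_def char_def by (rule integral_density) (use m cpos in auto)
      then show ?thesis by (simp add: char_def)
    qed
    have "D1 = D2"
      by (rule Levy_uniqueness[OF rd1 rd2]) (auto simp: chD1 chD2 ch)
    show ?thesis
    proof (rule measure_eqI)
      show "sets M1 = sets M2" using s1 s2 by simp
      fix A assume A: "A \<in> sets M1"
      have "ennreal (1/c) * emeasure M1 A = ennreal (1/c) * emeasure M2 A"
        using eD1[OF A] eD2[of A] A s1 s2 \<open>D1 = D2\<close> by simp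
      then show "emeasure M1 A = emeasure M2 A"
        using cpos by (simp add: ennreal_mult_cancel_left)
    qed
  qed
qed


definition ft :: "nat set \<Rightarrow> (nat \<Rightarrow> real) measure \<Rightarrow> (nat \<Rightarrow> real) \<Rightarrow> complex" where
  "ft I \<mu> t = (CLINT x|\<mu>. iexp (\<Sum>j\<in>I. t j * x j))"

lemma iexp_cos_sin: "iexp y = complex_of_real (cos y) + \<i> * complex_of_real (sin y)"
  by (simp add: cis_conv_exp[symmetric] complex_eq_iff)

lemma cos_iexp_expand:
  "(1 + cos y) *\<^sub>R iexp a = iexp (0 + a) + (iexp (y + a) + iexp (-y + a)) / 2"
proof -
  have c: "complex_of_real (cos y) = (iexp y + iexp (-y)) / 2"
    by (simp add: cos_of_real[symmetric] cos_exp_eq)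
  have "(1 + cos y) *\<^sub>R iexp a = (1 + complex_of_real (cos y)) * iexp a"
    by (simp add: scaleR_conv_of_real)
  also have "\<dots> = iexp a + (iexp y * iexp a + iexp (-y) * iexp a) / 2"
    unfolding c by (simp add: algebra_simps add_divide_distrib)
  also have "\<dots> = iexp (0 + a) + (iexp (y + a) + iexp (-y + a)) / 2"
    by (simp add: exp_add[symmetric] algebra_simps)
  finally show ?thesis .
qed

lemma sin_iexp_expand:
  "(1 + sin y) *\<^sub>R iexp a = iexp (0 + a) + (iexp (y + a) - iexp (-y + a)) / (2 * \<i>)"
proof -
  have c: "complex_of_real (sin y) = (iexp y - iexp (-y)) / (2 * \<i>)"
    by (simp add: sin_of_real[symmetric] sin_exp_eq)
  have "(1 + sin y) *\<^sub>R iexp a = (1 + complex_of_real (sin y)) * iexp a"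
    by (simp add: scaleR_conv_of_real)
  also have "\<dots> = iexp a + (iexp y * iexp a - iexp (-y) * iexp a) / (2 * \<i>)"
    unfolding c by (simp add: algebra_simps diff_divide_distrib add_divide_distrib)
  also have "\<dots> = iexp (0 + a) + (iexp (y + a) - iexp (-y + a)) / (2 * \<i>)"
    by (simp add: exp_add[symmetric] algebra_simps)
  finally show ?thesis .
qed

lemma lin_meas_PiM[measurable]:
  fixes t :: "nat \<Rightarrow> real"
  assumes "J \<subseteq> I"
  shows "(\<lambda>x. \<Sum>j\<in>J. t j * x j) \<in> borel_measurable (Pi\<^sub>M I (\<lambda>_. lborel))"
proof -
  have "\<And>j. j \<in> J \<Longrightarrow> (\<lambda>x. x j) \<in> borel_measurable (Pi\<^sub>M I (\<lambda>_. lborel))"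
    using assms measurable_component_singleton[of _ I "\<lambda>_. lborel"] by auto
  then show ?thesis
    by (intro borel_measurable_sum) (rule borel_measurable_times[OF borel_measurable_const], auto)
qed

lemma meas_iexp: "f \<in> borel_measurable M \<Longrightarrow> (\<lambda>x. iexp (f x)) \<in> borel_measurable M"
  by measurable

lemma ennreal_le2: "w \<le> 2 \<Longrightarrow> ennreal w \<le> 2"
  by (metis ennreal_leI ennreal_numeral)

lemma iexp_lin_meas_PiM[measurable]:
  fixes t :: "nat \<Rightarrow> real"
  shows "(\<lambda>x. iexp (\<Sum>j\<in>I. t j * x j)) \<in> borel_measurable (Pi\<^sub>M I (\<lambda>_. lborel))"
  by (rule meas_iexp) (rule lin_meas_PiM, simp)

lemma int_split3:
  fixes f g h :: "'a \<Rightarrow> complex"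
  assumes "integrable M f" "integrable M g" "integrable M h"
  shows "(CLINT x|M. f x + (g x + h x) / c) = (CLINT x|M. f x) + ((CLINT x|M. g x) + (CLINT x|M. h x)) / c"
    and "(CLINT x|M. f x + (g x - h x) / c) = (CLINT x|M. f x) + ((CLINT x|M. g x) - (CLINT x|M. h x)) / c"
  using assms by (simp_all add: integral_divide_zero)

lemma sum_upd_insert:
  assumes "finite I" "i \<notin> I"
  shows "(\<Sum>j\<in>insert i I. (t(i:=s)) j * x j) = s * x i + (\<Sum>j\<in>I. t j * x j)"
proof -
  have "(\<Sum>j\<in>I. (t(i:=s)) j * x j) = (\<Sum>j\<in>I. t j * x j)"
    using assms by (intro sum.cong) auto
  then show ?thesis using assms by simp
qed

context
  fixes I :: "nat set" and i :: nat and \<mu> :: "(nat \<Rightarrow> real) measure"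
  assumes fin: "finite I" and iI: "i \<notin> I" and fm: "finite_measure \<mu>"
    and sm[measurable_cong]: "sets \<mu> = sets (Pi\<^sub>M (insert i I) (\<lambda>_. lborel))"
begin

interpretation F: finite_measure \<mu> by (rule fm)

lemma meas_comp_i: "(\<lambda>x. x i) \<in> borel_measurable \<mu>"
  by measurable

lemma meas_restr: "(\<lambda>x. restrict x I) \<in> measurable \<mu> (Pi\<^sub>M I (\<lambda>_. lborel))"
  using measurable_restrict_subset[of I "insert i I" "\<lambda>_. lborel"]
  by (simp add: measurable_cong_sets[OF sm refl] subset_insertI)

lemma meas_lin:
  fixes t :: "nat \<Rightarrow> real"
  assumes "J \<subseteq> insert i I"
  shows "(\<lambda>x. \<Sum>j\<in>J. t j * x j) \<in> borel_measurable \<mu>"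
  using lin_meas_PiM[OF assms] by (simp add: measurable_cong_sets[OF sm refl])

lemma su: "(\<Sum>j\<in>insert i I. (t(i:=c)) j * x j) = c * x i + (\<Sum>j\<in>I. t j * x j)"
  by (rule sum_upd_insert[OF fin iI])

definition wmeas :: "(real \<Rightarrow> real) \<Rightarrow> (nat \<Rightarrow> real) measure" where
  "wmeas w = distr (density \<mu> (\<lambda>x. ennreal (w (x i)))) (Pi\<^sub>M I (\<lambda>_. lborel)) (\<lambda>x. restrict x I)"

lemma sets_wmeas: "sets (wmeas w) = sets (Pi\<^sub>M I (\<lambda>_. lborel))"
  by (simp add: wmeas_def)

lemma finite_wmeas:
  assumes w[measurable]: "w \<in> borel_measurable borel" and wb: "\<And>y. 0 \<le> w y" "\<And>y. w y \<le> 2"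
  shows "finite_measure (wmeas w)"
proof -
  have "finite_measure (density \<mu> (\<lambda>x. ennreal (w (x i))))"
  proof
    have "emeasure (density \<mu> (\<lambda>x. ennreal (w (x i)))) (space (density \<mu> (\<lambda>x. ennreal (w (x i))))) = (\<integral>\<^sup>+x. ennreal (w (x i)) \<partial>\<mu>)"
      by (subst emeasure_density) (auto intro!: nn_integral_cong)
    also have "\<dots> \<le> (\<integral>\<^sup>+x. ennreal 2 \<partial>\<mu>)"
      by (intro nn_integral_mono) (auto simp: wb intro!: ennreal_le2)
    also have "\<dots> < \<infinity>"
      apply (simp add: ennreal_mult_less_top)
      using F.emeasure_finite[of "space \<mu>"] top.not_eq_extremum by blast
    finally show "emeasure (density \<mu> (\<lambda>x. ennreal (w (x i)))) (space (density \<mu> (\<lambda>x. ennreal (w (x i))))) \<noteq> \<infinity>" by simp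
  qed
  then show ?thesis unfolding wmeas_def
    by (rule finite_measure.finite_measure_distr) (simp add: meas_restr)
qed

lemma ft_wmeas:
  assumes w[measurable]: "w \<in> borel_measurable borel" and wb: "\<And>y. 0 \<le> w y"
  shows "ft I (wmeas w) t = (CLINT x|\<mu>. w (x i) *\<^sub>R iexp (\<Sum>j\<in>I. t j * x j))"
proof -
  have "ft I (wmeas w) t = (CLINT x|density \<mu> (\<lambda>x. ennreal (w (x i))). iexp (\<Sum>j\<in>I. t j * restrict x I j))"
    unfolding ft_def wmeas_def
    apply (rule integral_distr)
     apply (simp add: meas_restr)
    apply (rule iexp_lin_meas_PiM)
    done
  also have "\<dots> = (CLINT x|\<mu>. w (x i) *\<^sub>R iexp (\<Sum>j\<in>I. t j * restrict x I j))"
  proof (rule integral_density)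
    show "(\<lambda>x. iexp (\<Sum>j\<in>I. t j * restrict x I j)) \<in> borel_measurable \<mu>"
      using measurable_compose[OF meas_restr iexp_lin_meas_PiM[of t]] by simp
  qed (auto simp: wb)
  also have "\<dots> = (CLINT x|\<mu>. w (x i) *\<^sub>R iexp (\<Sum>j\<in>I. t j * x j))"
    by (intro Bochner_Integration.integral_cong refl) (simp cong: sum.cong)
  finally show ?thesis .
qed

lemma int_wmeas:
  assumes w[measurable]: "w \<in> borel_measurable borel" and wb: "\<And>y. 0 \<le> w y"
    and C: "C \<in> sets (Pi\<^sub>M I (\<lambda>_. lborel))"
  shows "(LINT y|wmeas w. (indicator C y :: real)) = (LINT x|\<mu>. w (x i) * indicator C (restrict x I))"
proof -
  have "(LINT y|wmeas w. (indicator C y :: real)) = (LINT x|density \<mu> (\<lambda>x. ennreal (w (x i))). indicator C (restrict x I))"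
    unfolding wmeas_def
    apply (subst Bochner_Integration.integral_distr)
    using meas_restr apply simp
    using C apply simp
    apply simp
    done
  also have "\<dots> = (LINT x|\<mu>. w (x i) *\<^sub>R indicator C (restrict x I))"
  proof (rule integral_density)
    show "(\<lambda>x. indicator C (restrict x I) :: real) \<in> borel_measurable \<mu>"
      using measurable_compose[OF meas_restr borel_measurable_indicator[OF C]] by simp
  qed (auto simp: wb)
  finally show ?thesis by simp
qed

lemma integrable_bdd:
  fixes f :: "(nat \<Rightarrow> real) \<Rightarrow> 'b::{banach,second_countable_topology}"
  shows "f \<in> borel_measurable \<mu> \<Longrightarrow> (\<And>x. norm (f x) \<le> B) \<Longrightarrow> integrable \<mu> f"
  by (rule F.integrable_const_bound[where B=B]) auto

lemma wft_one:
  "(CLINT x|\<mu>. (1::real) *\<^sub>R iexp (\<Sum>j\<in>I. t j * x j)) = ft (insert i I) \<mu> (t(i:=0))"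
  unfolding ft_def su by simp

lemma wft_cos:
  "(CLINT x|\<mu>. (1 + cos (s * x i)) *\<^sub>R iexp (\<Sum>j\<in>I. t j * x j)) =
     ft (insert i I) \<mu> (t(i:=0)) + (ft (insert i I) \<mu> (t(i:=s)) + ft (insert i I) \<mu> (t(i:=-s))) / 2"
proof -
  let ?a = "\<lambda>x. \<Sum>j\<in>I. t j * x j"
  have e: "(1 + cos (s * x i)) *\<^sub>R iexp (?a x) =
      iexp (0 * x i + ?a x) + (iexp (s * x i + ?a x) + iexp (-s * x i + ?a x)) / 2" for x
    using cos_iexp_expand[of "s * x i" "?a x"] by simp
  have ii: "integrable \<mu> (\<lambda>x. iexp (c * x i + ?a x))" for c
  proof (rule integrable_bdd[where B=1])
    show "(\<lambda>x. iexp (c * x i + ?a x)) \<in> borel_measurable \<mu>"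
      by (rule meas_iexp, rule borel_measurable_add, rule borel_measurable_times) (auto intro: meas_lin)
  qed simp
  have "(CLINT x|\<mu>. (1 + cos (s * x i)) *\<^sub>R iexp (?a x)) =
      (CLINT x|\<mu>. iexp (0 * x i + ?a x) + (iexp (s * x i + ?a x) + iexp (-s * x i + ?a x)) / 2)"
    by (simp only: e)
  also have "\<dots> = (CLINT x|\<mu>. iexp (0 * x i + ?a x)) + ((CLINT x|\<mu>. iexp (s * x i + ?a x)) + (CLINT x|\<mu>. iexp (-s * x i + ?a x))) / 2"
    by (rule int_split3(1)[OF ii ii ii])
  finally show ?thesis
    unfolding ft_def su by simp
qed

lemma wft_sin:
  "(CLINT x|\<mu>. (1 + sin (s * x i)) *\<^sub>R iexp (\<Sum>j\<in>I. t j * x j)) =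
     ft (insert i I) \<mu> (t(i:=0)) + (ft (insert i I) \<mu> (t(i:=s)) - ft (insert i I) \<mu> (t(i:=-s))) / (2 * \<i>)"
proof -
  let ?a = "\<lambda>x. \<Sum>j\<in>I. t j * x j"
  have e: "(1 + sin (s * x i)) *\<^sub>R iexp (?a x) =
      iexp (0 * x i + ?a x) + (iexp (s * x i + ?a x) - iexp (-s * x i + ?a x)) / (2 * \<i>)" for x
    using sin_iexp_expand[of "s * x i" "?a x"] by simp
  have ii: "integrable \<mu> (\<lambda>x. iexp (c * x i + ?a x))" for c
  proof (rule integrable_bdd[where B=1])
    show "(\<lambda>x. iexp (c * x i + ?a x)) \<in> borel_measurable \<mu>"
      by (rule meas_iexp, rule borel_measurable_add, rule borel_measurable_times) (auto intro: meas_lin)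
  qed simp
  have "(CLINT x|\<mu>. (1 + sin (s * x i)) *\<^sub>R iexp (?a x)) =
      (CLINT x|\<mu>. iexp (0 * x i + ?a x) + (iexp (s * x i + ?a x) - iexp (-s * x i + ?a x)) / (2 * \<i>))"
    by (simp only: e)
  also have "\<dots> = (CLINT x|\<mu>. iexp (0 * x i + ?a x)) + ((CLINT x|\<mu>. iexp (s * x i + ?a x)) - (CLINT x|\<mu>. iexp (-s * x i + ?a x))) / (2 * \<i>)"
    by (rule int_split3(2)[OF ii ii ii])
  finally show ?thesis
    unfolding ft_def su by simp
qed


lemma meas_ind_restr:
  assumes C: "C \<in> sets (Pi\<^sub>M I (\<lambda>_. lborel))"
  shows "(\<lambda>x. indicator C (restrict x I) :: real) \<in> borel_measurable \<mu>"
  using measurable_compose[OF meas_restr borel_measurable_indicator[OF C]] by simp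

lemma meas_set_restr:
  assumes C: "C \<in> sets (Pi\<^sub>M I (\<lambda>_. lborel))" and B: "B \<in> sets borel"
  shows "{x\<in>space \<mu>. x i \<in> B \<and> restrict x I \<in> C} \<in> sets \<mu>"
proof -
  have "{x\<in>space \<mu>. x i \<in> B} \<in> sets \<mu>" using measurable_sets[OF meas_comp_i B]
    by (simp add: vimage_def Int_def conj_commute)
  moreover have "{x\<in>space \<mu>. restrict x I \<in> C} \<in> sets \<mu>" using measurable_sets[OF meas_restr C]
    by (simp add: vimage_def Int_def conj_commute)
  ultimately have "{x\<in>space \<mu>. x i \<in> B} \<inter> {x\<in>space \<mu>. restrict x I \<in> C} \<in> sets \<mu>" by auto
  then show ?thesis by (simp add: Collect_conj_eq[symmetric] Int_def) (metis (no_types, lifting) Collect_cong)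
qed

definition kmeas :: "(nat \<Rightarrow> real) set \<Rightarrow> real measure" where
  "kmeas C = distr (density \<mu> (\<lambda>x. ennreal (indicator C (restrict x I)))) borel (\<lambda>x. x i)"

lemma sets_kmeas: "sets (kmeas C) = sets borel"
  by (simp add: kmeas_def)

lemma finite_kmeas:
  assumes C: "C \<in> sets (Pi\<^sub>M I (\<lambda>_. lborel))"
  shows "finite_measure (kmeas C)"
proof -
  have "finite_measure (density \<mu> (\<lambda>x. ennreal (indicator C (restrict x I))))"
  proof
    have "emeasure (density \<mu> (\<lambda>x. ennreal (indicator C (restrict x I)))) (space (density \<mu> (\<lambda>x. ennreal (indicator C (restrict x I))))) = (\<integral>\<^sup>+x. ennreal (indicator C (restrict x I)) \<partial>\<mu>)"
      by (subst emeasure_density) (auto intro!: nn_integral_cong meas_ind_restr C)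
    also have "\<dots> \<le> (\<integral>\<^sup>+x. 1 \<partial>\<mu>)"
      by (intro nn_integral_mono) (auto simp: indicator_def)
    also have "\<dots> < \<infinity>"
      using F.emeasure_finite[of "space \<mu>"] by (simp add: less_top[symmetric])
    finally show "emeasure (density \<mu> (\<lambda>x. ennreal (indicator C (restrict x I)))) (space (density \<mu> (\<lambda>x. ennreal (indicator C (restrict x I))))) \<noteq> \<infinity>" by simp
  qed
  then show ?thesis unfolding kmeas_def
    by (rule finite_measure.finite_measure_distr) (simp add: meas_comp_i)
qed

lemma char_kmeas:
  assumes C: "C \<in> sets (Pi\<^sub>M I (\<lambda>_. lborel))"
  shows "char (kmeas C) s = (CLINT x|\<mu>. indicator C (restrict x I) *\<^sub>R iexp (s * x i))"
proof -
  have "char (kmeas C) s = (CLINT x|density \<mu> (\<lambda>x. ennreal (indicator C (restrict x I))). iexp (s * x i))"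
    unfolding char_def kmeas_def
    by (rule integral_distr) (simp_all add: meas_comp_i)
  also have "\<dots> = (CLINT x|\<mu>. indicator C (restrict x I) *\<^sub>R iexp (s * x i))"
  proof (rule integral_density)
    show "(\<lambda>x. iexp (s * x i)) \<in> borel_measurable \<mu>"
      by (rule meas_iexp) (rule borel_measurable_times[OF borel_measurable_const meas_comp_i])
  qed (auto intro: meas_ind_restr C)
  finally show ?thesis .
qed

lemma emeasure_kmeas:
  assumes C: "C \<in> sets (Pi\<^sub>M I (\<lambda>_. lborel))" and B: "B \<in> sets borel"
  shows "emeasure (kmeas C) B = emeasure \<mu> {x\<in>space \<mu>. x i \<in> B \<and> restrict x I \<in> C}"
proof -
  have "emeasure (kmeas C) B = emeasure (density \<mu> (\<lambda>x. ennreal (indicator C (restrict x I)))) ((\<lambda>x. x i) -` B \<inter> space \<mu>)"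
    unfolding kmeas_def by (subst emeasure_distr) (simp_all add: meas_comp_i B)
  also have "\<dots> = (\<integral>\<^sup>+x. ennreal (indicator C (restrict x I)) * indicator ((\<lambda>x. x i) -` B \<inter> space \<mu>) x \<partial>\<mu>)"
    by (rule emeasure_density) (auto intro: meas_ind_restr C measurable_sets[OF meas_comp_i B])
  also have "\<dots> = (\<integral>\<^sup>+x. indicator {x\<in>space \<mu>. x i \<in> B \<and> restrict x I \<in> C} x \<partial>\<mu>)"
    by (intro nn_integral_cong) (auto simp: indicator_def)
  also have "\<dots> = emeasure \<mu> {x\<in>space \<mu>. x i \<in> B \<and> restrict x I \<in> C}"
    by (rule nn_integral_indicator) (rule meas_set_restr[OF C B])
  finally show ?thesis .
qed

lemma integral_cis_split:
  assumes C: "C \<in> sets (Pi\<^sub>M I (\<lambda>_. lborel))"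
  shows "(CLINT x|\<mu>. indicator C (restrict x I) *\<^sub>R iexp (s * x i)) =
    complex_of_real (LINT x|\<mu>. cos (s * x i) * indicator C (restrict x I)) +
    \<i> * complex_of_real (LINT x|\<mu>. sin (s * x i) * indicator C (restrict x I))"
proof -
  have m1: "(\<lambda>x. cos (s * x i) * indicator C (restrict x I)) \<in> borel_measurable \<mu>"
    by (intro borel_measurable_times meas_ind_restr[OF C]) (rule measurable_compose[OF borel_measurable_times[OF borel_measurable_const meas_comp_i]], simp)
  have m2: "(\<lambda>x. sin (s * x i) * indicator C (restrict x I)) \<in> borel_measurable \<mu>"
    by (intro borel_measurable_times meas_ind_restr[OF C]) (rule measurable_compose[OF borel_measurable_times[OF borel_measurable_const meas_comp_i]], simp)
  have i1: "integrable \<mu> (\<lambda>x. cos (s * x i) * indicator C (restrict x I))"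
    by (rule integrable_bdd[OF m1, where B=1]) (auto simp: indicator_def abs_cos_le_one)
  have i2: "integrable \<mu> (\<lambda>x. sin (s * x i) * indicator C (restrict x I))"
    by (rule integrable_bdd[OF m2, where B=1]) (auto simp: indicator_def abs_sin_le_one)
  have e: "indicator C (restrict x I) *\<^sub>R iexp (s * x i) =
      complex_of_real (cos (s * x i) * indicator C (restrict x I)) + \<i> * complex_of_real (sin (s * x i) * indicator C (restrict x I))" for x
    by (subst iexp_cos_sin) (simp add: scaleR_conv_of_real algebra_simps)
  have "(CLINT x|\<mu>. indicator C (restrict x I) *\<^sub>R iexp (s * x i)) =
     (CLINT x|\<mu>. complex_of_real (cos (s * x i) * indicator C (restrict x I)) + \<i> * complex_of_real (sin (s * x i) * indicator C (restrict x I)))"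
    by (simp only: e)
  also have "\<dots> = (CLINT x|\<mu>. complex_of_real (cos (s * x i) * indicator C (restrict x I))) + (CLINT x|\<mu>. \<i> * complex_of_real (sin (s * x i) * indicator C (restrict x I)))"
    by (rule Bochner_Integration.integral_add[OF integrable_of_real[OF i1] integrable_mult_right[OF integrable_of_real[OF i2]]])
  also have "\<dots> = complex_of_real (LINT x|\<mu>. cos (s * x i) * indicator C (restrict x I)) +
    \<i> * complex_of_real (LINT x|\<mu>. sin (s * x i) * indicator C (restrict x I))"
    by (simp only: integral_complex_of_real integral_mult_right_zero)
  finally show ?thesis .
qed

lemma R_split:
  assumes C: "C \<in> sets (Pi\<^sub>M I (\<lambda>_. lborel))"
  shows "(LINT x|\<mu>. (1 + cos (s * x i)) * indicator C (restrict x I)) =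
      (LINT x|\<mu>. 1 * indicator C (restrict x I)) + (LINT x|\<mu>. cos (s * x i) * indicator C (restrict x I))"
    and "(LINT x|\<mu>. (1 + sin (s * x i)) * indicator C (restrict x I)) =
      (LINT x|\<mu>. 1 * indicator C (restrict x I)) + (LINT x|\<mu>. sin (s * x i) * indicator C (restrict x I))"
proof -
  have m0: "(\<lambda>x. 1 * indicator C (restrict x I) :: real) \<in> borel_measurable \<mu>"
    using meas_ind_restr[OF C] by simp
  have m1: "(\<lambda>x. cos (s * x i) * indicator C (restrict x I)) \<in> borel_measurable \<mu>"
    by (intro borel_measurable_times meas_ind_restr[OF C]) (rule measurable_compose[OF borel_measurable_times[OF borel_measurable_const meas_comp_i]], simp)
  have m2: "(\<lambda>x. sin (s * x i) * indicator C (restrict x I)) \<in> borel_measurable \<mu>"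
    by (intro borel_measurable_times meas_ind_restr[OF C]) (rule measurable_compose[OF borel_measurable_times[OF borel_measurable_const meas_comp_i]], simp)
  have i0: "integrable \<mu> (\<lambda>x. 1 * indicator C (restrict x I) :: real)"
    by (rule integrable_bdd[OF m0, where B=1]) (auto simp: indicator_def)
  have i1: "integrable \<mu> (\<lambda>x. cos (s * x i) * indicator C (restrict x I))"
    by (rule integrable_bdd[OF m1, where B=1]) (auto simp: indicator_def abs_cos_le_one)
  have i2: "integrable \<mu> (\<lambda>x. sin (s * x i) * indicator C (restrict x I))"
    by (rule integrable_bdd[OF m2, where B=1]) (auto simp: indicator_def abs_sin_le_one)
  show "(LINT x|\<mu>. (1 + cos (s * x i)) * indicator C (restrict x I)) =
      (LINT x|\<mu>. 1 * indicator C (restrict x I)) + (LINT x|\<mu>. cos (s * x i) * indicator C (restrict x I))"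
    using Bochner_Integration.integral_add[OF i0 i1] by (simp add: distrib_right)
  show "(LINT x|\<mu>. (1 + sin (s * x i)) * indicator C (restrict x I)) =
      (LINT x|\<mu>. 1 * indicator C (restrict x I)) + (LINT x|\<mu>. sin (s * x i) * indicator C (restrict x I))"
    using Bochner_Integration.integral_add[OF i0 i2] by (simp add: distrib_right)
qed

end


lemma meas_bnd_w:
  "(\<lambda>y::real. 1 + cos (s * y)) \<in> borel_measurable borel"
  "(\<lambda>y::real. 1 + sin (s * y)) \<in> borel_measurable borel"
  "(\<lambda>y::real. 1::real) \<in> borel_measurable borel"
  by measurable

lemma ft_unique_step:
  assumes fin: "finite I" and iI: "i \<notin> I"
    and IH: "\<And>\<mu> \<nu>. finite_measure \<mu> \<Longrightarrow> finite_measure \<nu> \<Longrightarrow>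
        sets \<mu> = sets (Pi\<^sub>M I (\<lambda>_. lborel)) \<Longrightarrow> sets \<nu> = sets (Pi\<^sub>M I (\<lambda>_. lborel)) \<Longrightarrow>
        (\<And>t. ft I \<mu> t = ft I \<nu> t) \<Longrightarrow> \<mu> = \<nu>"
    and fm: "finite_measure \<mu>" and fn: "finite_measure \<nu>"
    and sm: "sets \<mu> = sets (Pi\<^sub>M (insert i I) (\<lambda>_. lborel))"
    and sn: "sets \<nu> = sets (Pi\<^sub>M (insert i I) (\<lambda>_. lborel))"
    and eq: "\<And>t. ft (insert i I) \<mu> t = ft (insert i I) \<nu> t"
  shows "\<mu> = \<nu>"
proof -
  note A = fin iI fm sm
  note B = fin iI fn sn
  have W1: "wmeas I i \<mu> (\<lambda>_. 1) = wmeas I i \<nu> (\<lambda>_. 1)"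
  proof (rule IH)
    show "finite_measure (wmeas I i \<mu> (\<lambda>_. 1))" by (rule finite_wmeas[OF A]) auto
    show "finite_measure (wmeas I i \<nu> (\<lambda>_. 1))" by (rule finite_wmeas[OF B]) auto
    show "sets (wmeas I i \<mu> (\<lambda>_. 1)) = sets (Pi\<^sub>M I (\<lambda>_. lborel))" by (rule sets_wmeas[OF A])
    show "sets (wmeas I i \<nu> (\<lambda>_. 1)) = sets (Pi\<^sub>M I (\<lambda>_. lborel))" by (rule sets_wmeas[OF B])
    fix t
    show "ft I (wmeas I i \<mu> (\<lambda>_. 1)) t = ft I (wmeas I i \<nu> (\<lambda>_. 1)) t"
      using ft_wmeas[OF A meas_bnd_w(3)] ft_wmeas[OF B meas_bnd_w(3)] wft_one[OF A] wft_one[OF B] eq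
      by simp
  qed
  have Wc: "wmeas I i \<mu> (\<lambda>y. 1 + cos (s * y)) = wmeas I i \<nu> (\<lambda>y. 1 + cos (s * y))" for s
  proof (rule IH)
    show "finite_measure (wmeas I i \<mu> (\<lambda>y. 1 + cos (s * y)))"
      by (rule finite_wmeas[OF A meas_bnd_w(1)]) (smt (verit) cos_ge_minus_one cos_le_one)+
    show "finite_measure (wmeas I i \<nu> (\<lambda>y. 1 + cos (s * y)))"
      by (rule finite_wmeas[OF B meas_bnd_w(1)]) (smt (verit) cos_ge_minus_one cos_le_one)+
    show "sets (wmeas I i \<mu> (\<lambda>y. 1 + cos (s * y))) = sets (Pi\<^sub>M I (\<lambda>_. lborel))" by (rule sets_wmeas[OF A])
    show "sets (wmeas I i \<nu> (\<lambda>y. 1 + cos (s * y))) = sets (Pi\<^sub>M I (\<lambda>_. lborel))" by (rule sets_wmeas[OF B])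
    fix t
    have "0 \<le> 1 + cos y" for y :: real using cos_ge_minus_one[of y] by linarith
    then show "ft I (wmeas I i \<mu> (\<lambda>y. 1 + cos (s * y))) t = ft I (wmeas I i \<nu> (\<lambda>y. 1 + cos (s * y))) t"
      using ft_wmeas[OF A meas_bnd_w(1)] ft_wmeas[OF B meas_bnd_w(1)] wft_cos[OF A] wft_cos[OF B] eq
      by simp
  qed
  have Ws: "wmeas I i \<mu> (\<lambda>y. 1 + sin (s * y)) = wmeas I i \<nu> (\<lambda>y. 1 + sin (s * y))" for s
  proof (rule IH)
    show "finite_measure (wmeas I i \<mu> (\<lambda>y. 1 + sin (s * y)))"
      by (rule finite_wmeas[OF A meas_bnd_w(2)]) (smt (verit) sin_ge_minus_one sin_le_one)+
    show "finite_measure (wmeas I i \<nu> (\<lambda>y. 1 + sin (s * y)))"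
      by (rule finite_wmeas[OF B meas_bnd_w(2)]) (smt (verit) sin_ge_minus_one sin_le_one)+
    show "sets (wmeas I i \<mu> (\<lambda>y. 1 + sin (s * y))) = sets (Pi\<^sub>M I (\<lambda>_. lborel))" by (rule sets_wmeas[OF A])
    show "sets (wmeas I i \<nu> (\<lambda>y. 1 + sin (s * y))) = sets (Pi\<^sub>M I (\<lambda>_. lborel))" by (rule sets_wmeas[OF B])
    fix t
    have "0 \<le> 1 + sin y" for y :: real using sin_ge_minus_one[of y] by linarith
    then show "ft I (wmeas I i \<mu> (\<lambda>y. 1 + sin (s * y))) t = ft I (wmeas I i \<nu> (\<lambda>y. 1 + sin (s * y))) t"
      using ft_wmeas[OF A meas_bnd_w(2)] ft_wmeas[OF B meas_bnd_w(2)] wft_sin[OF A] wft_sin[OF B] eq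
      by simp
  qed
  have K: "kmeas I i \<mu> C = kmeas I i \<nu> C" if C: "C \<in> sets (Pi\<^sub>M I (\<lambda>_. lborel))" for C
  proof (rule finite_char_unique)
    show "finite_measure (kmeas I i \<mu> C)" by (rule finite_kmeas[OF A C])
    show "finite_measure (kmeas I i \<nu> C)" by (rule finite_kmeas[OF B C])
    show "sets (kmeas I i \<mu> C) = sets borel" by (rule sets_kmeas[OF A])
    show "sets (kmeas I i \<nu> C) = sets borel" by (rule sets_kmeas[OF B])
    show "char (kmeas I i \<mu> C) = char (kmeas I i \<nu> C)"
    proof
      fix s
      have c1: "0 \<le> 1 + cos y" for y :: real using cos_ge_minus_one[of y] by linarith
      have s1: "0 \<le> 1 + sin y" for y :: real using sin_ge_minus_one[of y] by linarith
      have r1: "(LINT x|\<mu>. (1::real) * indicator C (restrict x I)) = (LINT x|\<nu>. (1::real) * indicator C (restrict x I))"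
        using int_wmeas[OF A meas_bnd_w(3) _ C] int_wmeas[OF B meas_bnd_w(3) _ C] W1 by simp
      have rc: "(LINT x|\<mu>. (1 + cos (s * x i)) * indicator C (restrict x I)) = (LINT x|\<nu>. (1 + cos (s * x i)) * indicator C (restrict x I))"
      proof -
        have p: "\<And>y. 0 \<le> 1 + cos (s * y)" using c1 by simp
        have "(LINT x|\<mu>. (1 + cos (s * x i)) * indicator C (restrict x I)) = (LINT y|wmeas I i \<mu> (\<lambda>y. 1 + cos (s * y)). (indicator C y :: real))"
          by (rule int_wmeas[OF A meas_bnd_w(1) p C, symmetric])
        also have "\<dots> = (LINT y|wmeas I i \<nu> (\<lambda>y. 1 + cos (s * y)). (indicator C y :: real))"
          by (simp only: Wc[of s])
        also have "\<dots> = (LINT x|\<nu>. (1 + cos (s * x i)) * indicator C (restrict x I))"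
          by (rule int_wmeas[OF B meas_bnd_w(1) p C])
        finally show ?thesis .
      qed
      have rs: "(LINT x|\<mu>. (1 + sin (s * x i)) * indicator C (restrict x I)) = (LINT x|\<nu>. (1 + sin (s * x i)) * indicator C (restrict x I))"
      proof -
        have p: "\<And>y. 0 \<le> 1 + sin (s * y)" using s1 by simp
        have "(LINT x|\<mu>. (1 + sin (s * x i)) * indicator C (restrict x I)) = (LINT y|wmeas I i \<mu> (\<lambda>y. 1 + sin (s * y)). (indicator C y :: real))"
          by (rule int_wmeas[OF A meas_bnd_w(2) p C, symmetric])
        also have "\<dots> = (LINT y|wmeas I i \<nu> (\<lambda>y. 1 + sin (s * y)). (indicator C y :: real))"
          by (simp only: Ws[of s])
        also have "\<dots> = (LINT x|\<nu>. (1 + sin (s * x i)) * indicator C (restrict x I))"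
          by (rule int_wmeas[OF B meas_bnd_w(2) p C])
        finally show ?thesis .
      qed
      have ec: "(LINT x|\<mu>. cos (s * x i) * indicator C (restrict x I)) = (LINT x|\<nu>. cos (s * x i) * indicator C (restrict x I))"
        using rc r1 R_split(1)[OF A C, of s] R_split(1)[OF B C, of s] by simp
      have es: "(LINT x|\<mu>. sin (s * x i) * indicator C (restrict x I)) = (LINT x|\<nu>. sin (s * x i) * indicator C (restrict x I))"
        using rs r1 R_split(2)[OF A C, of s] R_split(2)[OF B C, of s] by simp
      show "char (kmeas I i \<mu> C) s = char (kmeas I i \<nu> C) s"
        unfolding char_kmeas[OF A C] char_kmeas[OF B C] integral_cis_split[OF A C] integral_cis_split[OF B C]
        using ec es by simp
    qed
  qed
  show ?thesis
  proof (rule measure_eqI_PiM_finite[where A="\<lambda>_. space (Pi\<^sub>M (insert i I) (\<lambda>_. lborel))"])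
    show "finite (insert i I)" using fin by simp
    show "sets \<mu> = sets (Pi\<^sub>M (insert i I) (\<lambda>_. lborel))" by (rule sm)
    show "sets \<nu> = sets (Pi\<^sub>M (insert i I) (\<lambda>_. lborel))" by (rule sn)
    show "range (\<lambda>_. space (Pi\<^sub>M (insert i I) (\<lambda>_. lborel))) \<subseteq> prod_algebra (insert i I) (\<lambda>_. lborel)"
      using prod_algebraI_finite[of "insert i I" "\<lambda>_. UNIV" "\<lambda>_. lborel"] fin
      by (auto simp: space_PiM)
    show "(\<Union>_. space (Pi\<^sub>M (insert i I) (\<lambda>_. lborel))) = space (Pi\<^sub>M (insert i I) (\<lambda>_. lborel))" by simp
    show "emeasure \<mu> (space (Pi\<^sub>M (insert i I) (\<lambda>_. lborel))) \<noteq> \<infinity>" for n :: nat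
      using finite_measure.emeasure_finite[OF fm] by simp
    fix E :: "nat \<Rightarrow> real set" assume E: "\<And>j. j \<in> insert i I \<Longrightarrow> E j \<in> sets lborel"
    have C: "Pi\<^sub>E I E \<in> sets (Pi\<^sub>M I (\<lambda>_. lborel))"
      using E by (intro sets_PiM_I_finite fin) auto
    have Bs: "E i \<in> sets borel" using E by simp
    have spm: "space \<mu> = space (Pi\<^sub>M (insert i I) (\<lambda>_. lborel))" using sets_eq_imp_space_eq[OF sm] .
    have spn: "space \<nu> = space (Pi\<^sub>M (insert i I) (\<lambda>_. lborel))" using sets_eq_imp_space_eq[OF sn] .
    have set: "{x \<in> space (Pi\<^sub>M (insert i I) (\<lambda>_. lborel)). x i \<in> E i \<and> restrict x I \<in> Pi\<^sub>E I E} = Pi\<^sub>E (insert i I) E"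
      using iI by (auto simp: space_PiM PiE_def Pi_def extensional_def)
    have "emeasure \<mu> (Pi\<^sub>E (insert i I) E) = emeasure (kmeas I i \<mu> (Pi\<^sub>E I E)) (E i)"
      using emeasure_kmeas[OF A C Bs] spm set by simp
    also have "\<dots> = emeasure (kmeas I i \<nu> (Pi\<^sub>E I E)) (E i)" using K[OF C] by simp
    also have "\<dots> = emeasure \<nu> (Pi\<^sub>E (insert i I) E)"
      using emeasure_kmeas[OF B C Bs] spn set by simp
    finally show "emeasure \<mu> (Pi\<^sub>E (insert i I) E) = emeasure \<nu> (Pi\<^sub>E (insert i I) E)" .
  qed
qed

lemma ft_unique:
  assumes "finite I"
  shows "finite_measure \<mu> \<Longrightarrow> finite_measure \<nu> \<Longrightarrow>
        sets \<mu> = sets (Pi\<^sub>M I (\<lambda>_. lborel)) \<Longrightarrow> sets \<nu> = sets (Pi\<^sub>M I (\<lambda>_. lborel)) \<Longrightarrow>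
        (\<And>t. ft I \<mu> t = ft I \<nu> t) \<Longrightarrow> \<mu> = \<nu>"
  using assms
proof (induction I arbitrary: \<mu> \<nu> rule: finite_induct)
  case empty
  have sp: "space \<mu> = {\<lambda>_. undefined}" "space \<nu> = {\<lambda>_. undefined}"
    using sets_eq_imp_space_eq[OF empty(3)] sets_eq_imp_space_eq[OF empty(4)]
    by (simp_all add: PiM_empty)
  have "ft {} \<mu> t = complex_of_real (measure \<mu> (space \<mu>))" for t
    by (simp add: ft_def scaleR_conv_of_real)
  moreover have "ft {} \<nu> t = complex_of_real (measure \<nu> (space \<nu>))" for t
    by (simp add: ft_def scaleR_conv_of_real)
  ultimately have mm: "measure \<mu> (space \<mu>) = measure \<nu> (space \<nu>)" using empty(5) by simp
  show ?case
  proof (rule measure_eqI)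
    show "sets \<mu> = sets \<nu>" using empty by simp
    fix A assume A: "A \<in> sets \<mu>"
    then have "A \<subseteq> {\<lambda>_. undefined}" using sets.sets_into_space sp by blast
    then have "A = {} \<or> A = {\<lambda>_. undefined}" by auto
    then show "emeasure \<mu> A = emeasure \<nu> A"
    proof
      assume "A = {}" then show ?thesis by simp
    next
      assume "A = {\<lambda>_. undefined}"
      then show ?thesis
        using mm sp finite_measure.emeasure_eq_measure[OF empty(1)] finite_measure.emeasure_eq_measure[OF empty(2)]
        by (metis)
    qed
  qed
next
  case (insert i I)
  show ?case
    by (rule ft_unique_step[OF insert(1,2) insert.IH insert(4-8)]) auto
qed


definition shear :: "(nat \<Rightarrow> real) \<Rightarrow> (nat \<Rightarrow> nat \<Rightarrow> real) \<Rightarrow> nat set \<Rightarrow> (nat \<Rightarrow> real) \<Rightarrow> (nat \<Rightarrow> real)" where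
  "shear a C I y = (\<lambda>j\<in>I. y j + a j + (\<Sum>k\<in>{k\<in>I. k < j}. C j k * y k))"

interpretation lb: product_sigma_finite "\<lambda>_::nat. lborel :: real measure"
  by standard

lemma shear_measurable[measurable]:
  assumes "finite I"
  shows "shear a C I \<in> measurable (Pi\<^sub>M I (\<lambda>_. lborel)) (Pi\<^sub>M I (\<lambda>_. lborel))"
  unfolding shear_def
proof (rule measurable_restrict)
  fix j assume j: "j \<in> I"
  have m1: "(\<lambda>y. \<Sum>k\<in>{k\<in>I. k < j}. C j k * y k) \<in> borel_measurable (Pi\<^sub>M I (\<lambda>_. lborel))"
    by (rule lin_meas_PiM) auto
  have m2: "(\<lambda>y. y j) \<in> borel_measurable (Pi\<^sub>M I (\<lambda>_. lborel))"
    using j measurable_component_singleton[of j I "\<lambda>_. lborel"] by simp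
  show "(\<lambda>y. y j + a j + (\<Sum>k\<in>{k\<in>I. k < j}. C j k * y k)) \<in> measurable (Pi\<^sub>M I (\<lambda>_. lborel)) lborel"
    using borel_measurable_add[OF borel_measurable_add[OF m2 borel_measurable_const] m1] by simp
qed

lemma shear_insert_max:
  assumes fin: "finite J" and lt: "\<forall>k\<in>J. k < n" and x: "x \<in> space (Pi\<^sub>M J (\<lambda>_. lborel))"
  shows "shear a C (insert n J) (x(n := y)) = (shear a C J x)(n := y + (a n + (\<Sum>k\<in>J. C n k * x k)))"
proof
  fix j
  have nJ: "n \<notin> J" using lt by auto
  show "shear a C (insert n J) (x(n := y)) j = ((shear a C J x)(n := y + (a n + (\<Sum>k\<in>J. C n k * x k)))) j"
  proof (cases "j = n")
    case True
    have "{k \<in> insert n J. k < n} = J" using lt by auto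
    moreover have "(\<Sum>k\<in>J. C n k * (x(n := y)) k) = (\<Sum>k\<in>J. C n k * x k)"
      using nJ by (intro sum.cong) auto
    ultimately show ?thesis using True by (simp add: shear_def)
  next
    case False
    show ?thesis
    proof (cases "j \<in> J")
      case True
      have "{k \<in> insert n J. k < j} = {k\<in>J. k < j}" using lt True by auto
      moreover have "(\<Sum>k\<in>{k\<in>J. k < j}. C j k * (x(n := y)) k) = (\<Sum>k\<in>{k\<in>J. k < j}. C j k * x k)"
        using nJ by (intro sum.cong) auto
      ultimately show ?thesis using True False by (simp add: shear_def)
    next
      case f2: False
      then show ?thesis using False by (simp add: shear_def)
    qed
  qed
qed

lemma shear_preserves:
  assumes "finite I"
  shows "distr (Pi\<^sub>M I (\<lambda>_. lborel)) (Pi\<^sub>M I (\<lambda>_. lborel)) (shear a C I) = Pi\<^sub>M I (\<lambda>_. lborel)"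
  using assms
proof (induction I rule: finite_linorder_max_induct)
  case empty
  have "distr (Pi\<^sub>M {} (\<lambda>_. lborel)) (Pi\<^sub>M {} (\<lambda>_. lborel)) (shear a C {}) =
        distr (Pi\<^sub>M {} (\<lambda>_. lborel)) (Pi\<^sub>M {} (\<lambda>_. lborel)) (\<lambda>x. x)"
    by (rule distr_cong) (auto simp: shear_def space_PiM)
  also have "\<dots> = Pi\<^sub>M {} (\<lambda>_. lborel)" by (rule distr_id)
  finally show ?case .
next
  case (insert n J)
  let ?P = "Pi\<^sub>M J (\<lambda>_. lborel :: real measure)"
  let ?P' = "Pi\<^sub>M (insert n J) (\<lambda>_. lborel :: real measure)"
  have nJ: "n \<notin> J" using insert by auto
  have finI: "finite (insert n J)" using insert by simp
  show ?case
  proof (rule measure_eqI)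
    show "sets (distr ?P' ?P' (shear a C (insert n J))) = sets ?P'" by simp
    fix X assume X: "X \<in> sets (distr ?P' ?P' (shear a C (insert n J)))"
    then have X[measurable]: "X \<in> sets ?P'" by simp
    have h_meas[measurable]: "(\<lambda>u. \<integral>\<^sup>+ y. indicator X (u(n := y)) \<partial>lborel) \<in> borel_measurable ?P"
    proof -
      have "(\<lambda>(u, y). indicator X (u(n := y)) :: ennreal) \<in> borel_measurable (?P \<Otimes>\<^sub>M lborel)"
      proof -
        have "(\<lambda>(u, y). u(n := y)) \<in> measurable (?P \<Otimes>\<^sub>M lborel) ?P'"
          using measurable_add_dim[of n J "\<lambda>_. lborel"] by simp
        then show ?thesis
          using measurable_compose[OF _ borel_measurable_indicator[OF X]]
          by (simp add: case_prod_beta')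
      qed
      then show ?thesis
        by (rule lborel.borel_measurable_nn_integral[of "\<lambda>u y. indicator X (u(n := y))", simplified])
    qed
    have "emeasure (distr ?P' ?P' (shear a C (insert n J))) X = emeasure ?P' (shear a C (insert n J) -` X \<inter> space ?P')"
      by (rule emeasure_distr[OF shear_measurable[OF finI] X])
    also have "\<dots> = (\<integral>\<^sup>+ z. indicator (shear a C (insert n J) -` X \<inter> space ?P') z \<partial>?P')"
      by (rule nn_integral_indicator[symmetric]) (rule measurable_sets[OF shear_measurable[OF finI] X])
    also have "\<dots> = (\<integral>\<^sup>+ z. indicator X (shear a C (insert n J) z) \<partial>?P')"
      by (rule nn_integral_cong) (auto simp: indicator_def)
    also have "\<dots> = (\<integral>\<^sup>+ x. (\<integral>\<^sup>+ y. indicator X (shear a C (insert n J) (x(n := y))) \<partial>lborel) \<partial>?P)"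
      by (rule lb.product_nn_integral_insert[OF insert(1) nJ])
         (rule measurable_compose[OF shear_measurable[OF finI] borel_measurable_indicator[OF X]])
    also have "\<dots> = (\<integral>\<^sup>+ x. (\<integral>\<^sup>+ y. indicator X ((shear a C J x)(n := y)) \<partial>lborel) \<partial>?P)"
    proof (rule nn_integral_cong)
      fix x assume x: "x \<in> space ?P"
      let ?b = "a n + (\<Sum>k\<in>J. C n k * x k)"
      have "(\<integral>\<^sup>+ y. indicator X (shear a C (insert n J) (x(n := y))) \<partial>lborel) =
            (\<integral>\<^sup>+ y. indicator X ((shear a C J x)(n := y + ?b)) \<partial>lborel)"
        using shear_insert_max[OF insert(1) insert(2) x] by simp
      also have "\<dots> = (\<integral>\<^sup>+ y. indicator X ((shear a C J x)(n := ?b + 1 * y)) \<partial>lborel)"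
        by (simp add: add.commute)
      also have "\<dots> = (\<integral>\<^sup>+ y. indicator X ((shear a C J x)(n := y)) \<partial>lborel)"
      proof -
        have sx: "shear a C J x \<in> space ?P"
          using measurable_space[OF shear_measurable[OF insert(1)] x] .
        have m: "(\<lambda>y. indicator X ((shear a C J x)(n := y)) :: ennreal) \<in> borel_measurable borel"
          using measurable_compose[OF measurable_component_update[OF sx nJ] borel_measurable_indicator[OF X]]
          by (simp add: comp_def)
        show ?thesis using nn_integral_real_affine[OF m, of 1 ?b] by simp
      qed
      finally show "(\<integral>\<^sup>+ y. indicator X (shear a C (insert n J) (x(n := y))) \<partial>lborel) =
            (\<integral>\<^sup>+ y. indicator X ((shear a C J x)(n := y)) \<partial>lborel)" .
    qed
    also have "\<dots> = (\<integral>\<^sup>+ u. (\<integral>\<^sup>+ y. indicator X (u(n := y)) \<partial>lborel) \<partial>(distr ?P ?P (shear a C J)))"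
      by (rule nn_integral_distr[symmetric]) (simp_all add: insert(1))
    also have "\<dots> = (\<integral>\<^sup>+ u. (\<integral>\<^sup>+ y. indicator X (u(n := y)) \<partial>lborel) \<partial>?P)"
      by (simp only: insert.IH)
    also have "\<dots> = (\<integral>\<^sup>+ z. indicator X z \<partial>?P')"
      by (rule lb.product_nn_integral_insert[OF insert(1) nJ, symmetric]) simp
    also have "\<dots> = emeasure ?P' X" by simp
    finally show "emeasure (distr ?P' ?P' (shear a C (insert n J))) X = emeasure ?P' X" .
  qed
qed


lemma prod_indicator_PiE:
  fixes A :: "nat \<Rightarrow> real set"
  assumes fin: "finite I" and "x \<in> space (Pi\<^sub>M I (\<lambda>_. lborel :: real measure))"
  shows "(\<Prod>j\<in>I. indicator (A j) (x j) :: ennreal) = indicator (Pi\<^sub>E I A) x"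
proof (cases "\<forall>j\<in>I. x j \<in> A j")
  case True
  then have "x \<in> Pi\<^sub>E I A" using assms by (auto simp: space_PiM PiE_def Pi_def)
  then show ?thesis using True by simp
next
  case False
  then obtain j where j: "j \<in> I" "x j \<notin> A j" by auto
  then have "x \<notin> Pi\<^sub>E I A" by (auto simp: PiE_def Pi_def)
  then have "indicator (Pi\<^sub>E I A) x = (0::ennreal)" by simp
  moreover have "(\<Prod>j\<in>I. indicator (A j) (x j)) = (0::ennreal)"
    by (rule prod_zero[OF fin], rule bexI[of _ j]) (use j in simp_all)
  ultimately show ?thesis by simp
qed

lemma PiM_gauss_density_aux:
  fixes I :: "nat set" and d :: "nat \<Rightarrow> real"
  assumes fin: "finite I" and d: "\<And>j. 0 < d j"
  shows "Pi\<^sub>M I (\<lambda>j. gauss 0 (d j)) =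
    density (Pi\<^sub>M I (\<lambda>_. lborel)) (\<lambda>x. \<Prod>j\<in>I. ennreal (normal_density 0 (sqrt (d j)) (x j)))"
proof -
  have pj: "prob_space (gauss 0 (d j))" for j
    using real_distribution_gauss[of "d j" 0] d[of j] by (simp add: real_distribution_def)
  interpret G: product_prob_space "\<lambda>j. gauss 0 (d j)" I
    by (simp add: product_prob_space_def product_sigma_finite_def product_prob_space_axioms_def pj prob_space_imp_sigma_finite)
  have gd: "gauss 0 (d j) = density lborel (\<lambda>x. ennreal (normal_density 0 (sqrt (d j)) x))" for j
    using d[of j] by (simp add: gauss_def)
  have nm: "(\<lambda>x. ennreal (normal_density 0 (sqrt (d j)) (x j))) \<in> borel_measurable (Pi\<^sub>M I (\<lambda>_. lborel))" if "j \<in> I" for j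
  proof -
    have f1: "(\<lambda>y. ennreal (normal_density 0 (sqrt (d j)) y)) \<in> borel_measurable borel"
      by (simp add: normal_density_def)
    have f2: "(\<lambda>x. x j) \<in> measurable (Pi\<^sub>M I (\<lambda>_. lborel)) borel"
      using measurable_component_singleton[OF that, of "\<lambda>_. lborel"] by simp
    show ?thesis
      using measurable_compose[OF f2 f1] .
  qed
  show ?thesis
  proof (rule G.PiM_eqI[symmetric, OF fin])
    show "sets (density (Pi\<^sub>M I (\<lambda>_. lborel)) (\<lambda>x. \<Prod>j\<in>I. ennreal (normal_density 0 (sqrt (d j)) (x j)))) =
      sets (Pi\<^sub>M I (\<lambda>j. gauss 0 (d j)))"
      unfolding sets_density by (rule sets_PiM_cong) auto
    fix A :: "nat \<Rightarrow> real set" assume A: "\<And>j. j \<in> I \<Longrightarrow> A j \<in> sets (gauss 0 (d j))"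
    then have A': "\<And>j. j \<in> I \<Longrightarrow> A j \<in> sets lborel" by simp
    have PA: "Pi\<^sub>E I A \<in> sets (Pi\<^sub>M I (\<lambda>_. lborel))"
      using A' by (intro sets_PiM_I_finite fin) auto
    have "emeasure (density (Pi\<^sub>M I (\<lambda>_. lborel)) (\<lambda>x. \<Prod>j\<in>I. ennreal (normal_density 0 (sqrt (d j)) (x j)))) (Pi\<^sub>E I A)
      = (\<integral>\<^sup>+x. (\<Prod>j\<in>I. ennreal (normal_density 0 (sqrt (d j)) (x j))) * indicator (Pi\<^sub>E I A) x \<partial>Pi\<^sub>M I (\<lambda>_. lborel))"
      by (rule emeasure_density[OF _ PA]) (intro borel_measurable_prod_ennreal nm)
    also have "\<dots> = (\<integral>\<^sup>+x. (\<Prod>j\<in>I. ennreal (normal_density 0 (sqrt (d j)) (x j)) * indicator (A j) (x j)) \<partial>Pi\<^sub>M I (\<lambda>_. lborel))"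
    proof (rule nn_integral_cong)
      fix x :: "nat \<Rightarrow> real" assume x: "x \<in> space (Pi\<^sub>M I (\<lambda>_. lborel))"
      show "(\<Prod>j\<in>I. ennreal (normal_density 0 (sqrt (d j)) (x j))) * indicator (Pi\<^sub>E I A) x =
        (\<Prod>j\<in>I. ennreal (normal_density 0 (sqrt (d j)) (x j)) * indicator (A j) (x j))"
        by (simp only: prod.distrib prod_indicator_PiE[OF fin x])
    qed
    also have "\<dots> = (\<Prod>j\<in>I. (\<integral>\<^sup>+y. ennreal (normal_density 0 (sqrt (d j)) y) * indicator (A j) y \<partial>lborel))"
      by (rule lb.product_nn_integral_prod[OF fin]) (use A' in auto)
    also have "\<dots> = (\<Prod>j\<in>I. emeasure (gauss 0 (d j)) (A j))"
    proof (rule prod.cong[OF refl])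
      fix j assume j: "j \<in> I"
      show "(\<integral>\<^sup>+y. ennreal (normal_density 0 (sqrt (d j)) y) * indicator (A j) y \<partial>lborel) = emeasure (gauss 0 (d j)) (A j)"
        unfolding gd by (rule emeasure_density[symmetric]) (use A' j in auto)
    qed
    finally show "emeasure (density (Pi\<^sub>M I (\<lambda>_. lborel)) (\<lambda>x. \<Prod>j\<in>I. ennreal (normal_density 0 (sqrt (d j)) (x j)))) (Pi\<^sub>E I A)
      = (\<Prod>j\<in>I. emeasure (gauss 0 (d j)) (A j))" .
  qed
qed

lemma PiM_gauss_abs_cont:
  fixes I :: "nat set" and d :: "nat \<Rightarrow> real"
  assumes fin: "finite I" and d: "\<And>j. j \<in> I \<Longrightarrow> 0 < d j"
  shows "absolutely_continuous (Pi\<^sub>M I (\<lambda>_. lborel)) (Pi\<^sub>M I (\<lambda>j. gauss 0 (d j)))"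
proof -
  define dd where "dd j = (if j \<in> I then d j else 1)" for j
  have dd: "0 < dd j" for j using d by (simp add: dd_def)
  have "Pi\<^sub>M I (\<lambda>j. gauss 0 (d j)) = Pi\<^sub>M I (\<lambda>j. gauss 0 (dd j))"
    by (rule PiM_cong) (simp_all add: dd_def)
  also have "\<dots> = density (Pi\<^sub>M I (\<lambda>_. lborel)) (\<lambda>x. \<Prod>j\<in>I. ennreal (normal_density 0 (sqrt (dd j)) (x j)))"
    by (rule PiM_gauss_density_aux[OF fin dd])
  moreover have "(\<lambda>x. \<Prod>j\<in>I. ennreal (normal_density 0 (sqrt (dd j)) (x j))) \<in> borel_measurable (Pi\<^sub>M I (\<lambda>_. lborel))"
  proof (intro borel_measurable_prod_ennreal)
    fix j assume j: "j \<in> I"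
    have f1: "(\<lambda>y. ennreal (normal_density 0 (sqrt (dd j)) y)) \<in> borel_measurable borel"
      by (simp add: normal_density_def)
    have f2: "(\<lambda>x. x j) \<in> measurable (Pi\<^sub>M I (\<lambda>_. lborel)) borel"
      using measurable_component_singleton[OF j, of "\<lambda>_. lborel"] by simp
    show "(\<lambda>x. ennreal (normal_density 0 (sqrt (dd j)) (x j))) \<in> borel_measurable (Pi\<^sub>M I (\<lambda>_. lborel))"
      using measurable_compose[OF f2 f1] .
  qed
  ultimately show ?thesis
    using absolutely_continuousI_density by metis
qed


definition ev :: "nat \<Rightarrow> nat \<Rightarrow> real" where
  "ev j = (\<lambda>q. if q = j then 1 else 0)"

function gs :: "((nat \<Rightarrow> real) \<Rightarrow> (nat \<Rightarrow> real) \<Rightarrow> real) \<Rightarrow> nat \<Rightarrow> nat \<Rightarrow> real" where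
  "gs B j = (\<lambda>p. ev j p - (\<Sum>k\<in>{1..<j}. (B (ev j) (gs B k) / B (gs B k) (gs B k)) * gs B k p))"
  by pat_completeness auto
termination by (relation "Wellfounded.measure (\<lambda>(B, j). j)") auto

declare gs.simps[simp del]

definition gcoef :: "((nat \<Rightarrow> real) \<Rightarrow> (nat \<Rightarrow> real) \<Rightarrow> real) \<Rightarrow> nat \<Rightarrow> nat \<Rightarrow> real" where
  "gcoef B j k = B (ev j) (gs B k) / B (gs B k) (gs B k)"

lemma gs_eq: "gs B j p = ev j p - (\<Sum>k\<in>{1..<j}. gcoef B j k * gs B k p)"
  by (subst gs.simps) (simp add: gcoef_def)

lemma ev_gs: "ev j p = gs B j p + (\<Sum>k\<in>{1..<j}. gcoef B j k * gs B k p)"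
  using gs_eq[of B j p] by simp

lemma gs_support: "1 \<le> j \<Longrightarrow> (j < p \<or> p = 0) \<Longrightarrow> gs B j p = 0"
proof (induction j arbitrary: p rule: less_induct)
  case (less j)
  have "(\<Sum>k\<in>{1..<j}. gcoef B j k * gs B k p) = 0"
    using less by (intro sum.neutral) auto
  moreover have "ev j p = 0" using less by (auto simp: ev_def)
  ultimately show ?case by (subst gs_eq) simp
qed

lemma gs_diag: "1 \<le> j \<Longrightarrow> gs B j j = 1"
proof -
  assume j: "1 \<le> j"
  have "(\<Sum>k\<in>{1..<j}. gcoef B j k * gs B k j) = 0"
    by (intro sum.neutral) (auto intro: gs_support)
  then show ?thesis by (subst gs_eq) (simp add: ev_def)
qed

locale bilin =
  fixes r :: nat and B :: "(nat \<Rightarrow> real) \<Rightarrow> (nat \<Rightarrow> real) \<Rightarrow> real"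
  assumes symm: "\<And>u w. B u w = B w u"
    and lin: "\<And>u w w' a b. B u (\<lambda>p. a * w p + b * w' p) = a * B u w + b * B u w'"
    and pd: "\<And>u. (\<exists>p\<in>{1..r}. u p \<noteq> 0) \<Longrightarrow> B u u > 0"
    and loc: "\<And>u u' w. (\<forall>p\<in>{1..r}. u p = u' p) \<Longrightarrow> B u w = B u' w"
begin

lemma B_zero: "B u (\<lambda>p. 0) = 0"
  using lin[of u 0 "\<lambda>p. 0" 0 "\<lambda>p. 0"] by simp

lemma B_sum: "finite K \<Longrightarrow> B u (\<lambda>p. \<Sum>k\<in>K. c k * w k p) = (\<Sum>k\<in>K. c k * B u (w k))"
proof (induction K rule: finite_induct)
  case empty then show ?case by (simp add: B_zero)
next
  case (insert k K)
  have "B u (\<lambda>p. \<Sum>k\<in>insert k K. c k * w k p) = B u (\<lambda>p. c k * w k p + 1 * (\<Sum>k\<in>K. c k * w k p))"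
    using insert by simp
  also have "\<dots> = c k * B u (w k) + 1 * B u (\<lambda>p. \<Sum>k\<in>K. c k * w k p)" by (rule lin)
  finally show ?case using insert by simp
qed

lemma B_diff: "B u (\<lambda>p. f p - g p) = B u f - B u g"
  using lin[of u 1 f "-1" g] by simp

lemma gs_pos: "j \<in> {1..r} \<Longrightarrow> B (gs B j) (gs B j) > 0"
  by (rule pd) (auto intro!: bexI[of _ j] simp: gs_diag)

lemma gs_orth: "1 \<le> k \<Longrightarrow> k < j \<Longrightarrow> j \<le> r \<Longrightarrow> B (gs B j) (gs B k) = 0"
proof (induction j arbitrary: k rule: less_induct)
  case (less j)
  have orth: "B (gs B k) (gs B k') = 0" if "k' \<in> {1..<j}" "k' \<noteq> k" for k'
  proof (cases "k' < k")
    case True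
    then show ?thesis using less.IH[of k k'] less.prems that by auto
  next
    case False
    then have "k < k'" using that by auto
    then show ?thesis using less.IH[of k' k] less.prems that symm by auto
  qed
  have kin: "k \<in> {1..<j}" using less.prems by auto
  have gsj: "gs B j = (\<lambda>p. ev j p - (\<Sum>k\<in>{1..<j}. gcoef B j k * gs B k p))"
    by (rule ext) (rule gs_eq)
  have "B (gs B j) (gs B k) = B (gs B k) (gs B j)" by (rule symm)
  also have "\<dots> = B (gs B k) (\<lambda>p. ev j p - (\<Sum>k\<in>{1..<j}. gcoef B j k * gs B k p))"
    by (simp only: gsj)
  also have "\<dots> =
      B (gs B k) (ev j) - (\<Sum>k'\<in>{1..<j}. gcoef B j k' * B (gs B k) (gs B k'))"
    by (simp add: B_diff B_sum)
  also have "(\<Sum>k'\<in>{1..<j}. gcoef B j k' * B (gs B k) (gs B k')) = gcoef B j k * B (gs B k) (gs B k)"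
    using kin by (subst sum.remove[of _ k]) (auto intro!: sum.neutral simp: orth)
  also have "gcoef B j k * B (gs B k) (gs B k) = B (ev j) (gs B k)"
    using gs_pos[of k] less.prems by (simp add: gcoef_def)
  also have "B (gs B k) (ev j) - B (ev j) (gs B k) = 0" by (simp add: symm)
  finally show ?case .
qed

definition gd :: "nat \<Rightarrow> real" where "gd k = B (gs B k) (gs B k)"

definition ucoef :: "(nat \<Rightarrow> real) \<Rightarrow> nat \<Rightarrow> real" where
  "ucoef t k = t k + (\<Sum>j\<in>{k<..r}. t j * gcoef B j k)"

lemma expand:
  "(\<lambda>p. \<Sum>j\<in>{1..r}. t j * ev j p) = (\<lambda>p. \<Sum>k\<in>{1..r}. ucoef t k * gs B k p)"
proof
  fix p
  have "(\<Sum>j\<in>{1..r}. t j * ev j p) = (\<Sum>j\<in>{1..r}. t j * (gs B j p + (\<Sum>k\<in>{1..<j}. gcoef B j k * gs B k p)))"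
    by (rule sum.cong[OF refl]) (simp only: ev_gs[where B=B and p=p])
  also have "\<dots> = (\<Sum>j\<in>{1..r}. t j * gs B j p) + (\<Sum>j\<in>{1..r}. \<Sum>k\<in>{1..<j}. t j * gcoef B j k * gs B k p)"
    by (simp add: algebra_simps sum.distrib sum_distrib_left)
  also have "(\<Sum>j\<in>{1..r}. \<Sum>k\<in>{1..<j}. t j * gcoef B j k * gs B k p) =
      (\<Sum>k\<in>{1..r}. \<Sum>j\<in>{k<..r}. t j * gcoef B j k * gs B k p)"
  proof -
    have "(\<Sum>j\<in>{1..r}. \<Sum>k\<in>{1..<j}. t j * gcoef B j k * gs B k p) =
        (\<Sum>(j,k)\<in>Sigma {1..r} (\<lambda>j. {1..<j}). t j * gcoef B j k * gs B k p)"
      by (rule sum.Sigma) auto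
    also have "\<dots> = (\<Sum>(k,j)\<in>Sigma {1..r} (\<lambda>k. {k<..r}). t j * gcoef B j k * gs B k p)"
      by (rule sum.reindex_bij_witness[where i="\<lambda>(k,j). (j,k)" and j="\<lambda>(j,k). (k,j)"]) auto
    also have "\<dots> = (\<Sum>k\<in>{1..r}. \<Sum>j\<in>{k<..r}. t j * gcoef B j k * gs B k p)"
      by (rule sum.Sigma[symmetric]) auto
    finally show ?thesis .
  qed
  also have "(\<Sum>j\<in>{1..r}. t j * gs B j p) + (\<Sum>k\<in>{1..r}. \<Sum>j\<in>{k<..r}. t j * gcoef B j k * gs B k p) =
      (\<Sum>k\<in>{1..r}. ucoef t k * gs B k p)"
    by (simp add: ucoef_def algebra_simps sum.distrib sum_distrib_left sum_distrib_right)
  finally show "(\<Sum>j\<in>{1..r}. t j * ev j p) = (\<Sum>k\<in>{1..r}. ucoef t k * gs B k p)" .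
qed

lemma quad_diag: "B t t = (\<Sum>k\<in>{1..r}. (ucoef t k)^2 * gd k)"
proof -
  let ?t' = "\<lambda>p. \<Sum>j\<in>{1..r}. t j * ev j p"
  have tt': "\<forall>p\<in>{1..r}. t p = ?t' p"
  proof
    fix p assume p: "p \<in> {1..r}"
    have "(\<Sum>j\<in>{1..r}. t j * ev j p) = t p * ev p p"
      using p by (subst sum.remove[of _ p]) (auto intro!: sum.neutral simp: ev_def)
    then show "t p = ?t' p" by (simp add: ev_def)
  qed
  have "B t t = B ?t' t" by (rule loc[OF tt'])
  also have "\<dots> = B t ?t'" by (rule symm)
  also have "\<dots> = B ?t' ?t'" by (rule loc[OF tt'])
  also have "\<dots> = B (\<lambda>p. \<Sum>k\<in>{1..r}. ucoef t k * gs B k p) (\<lambda>p. \<Sum>k\<in>{1..r}. ucoef t k * gs B k p)"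
    by (simp only: expand)
  also have "\<dots> = (\<Sum>k\<in>{1..r}. ucoef t k * B (\<lambda>p. \<Sum>k\<in>{1..r}. ucoef t k * gs B k p) (gs B k))"
    by (rule B_sum) simp
  also have "\<dots> = (\<Sum>k\<in>{1..r}. ucoef t k * (\<Sum>k'\<in>{1..r}. ucoef t k' * B (gs B k) (gs B k')))"
  proof (rule sum.cong[OF refl])
    fix k
    have "B (\<lambda>p. \<Sum>k\<in>{1..r}. ucoef t k * gs B k p) (gs B k) = B (gs B k) (\<lambda>p. \<Sum>k\<in>{1..r}. ucoef t k * gs B k p)"
      by (rule symm)
    also have "\<dots> = (\<Sum>k'\<in>{1..r}. ucoef t k' * B (gs B k) (gs B k'))"
      by (rule B_sum) simp
    finally show "ucoef t k * B (\<lambda>p. \<Sum>k\<in>{1..r}. ucoef t k * gs B k p) (gs B k) = ucoef t k * (\<Sum>k'\<in>{1..r}. ucoef t k' * B (gs B k) (gs B k'))"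
      by simp
  qed
  also have "\<dots> = (\<Sum>k\<in>{1..r}. ucoef t k * (ucoef t k * gd k))"
  proof (rule sum.cong[OF refl])
    fix k assume k: "k \<in> {1..r}"
    have "(\<Sum>k'\<in>{1..r}. ucoef t k' * B (gs B k) (gs B k')) = ucoef t k * B (gs B k) (gs B k)"
    proof (subst sum.remove[of _ k])
      show "ucoef t k * B (gs B k) (gs B k) + (\<Sum>k'\<in>{1..r} - {k}. ucoef t k' * B (gs B k) (gs B k')) = ucoef t k * B (gs B k) (gs B k)"
      proof -
        have "B (gs B k) (gs B k') = 0" if "k' \<in> {1..r} - {k}" for k'
        proof (cases "k' < k")
          case True then show ?thesis using gs_orth[of k' k] k that by auto
        next
          case False then have "k < k'" using that by auto
          then show ?thesis using gs_orth[of k k'] k that symm by auto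
        qed
        then show ?thesis by simp
      qed
    qed (use k in auto)
    then show "ucoef t k * (\<Sum>k'\<in>{1..r}. ucoef t k' * B (gs B k) (gs B k')) = ucoef t k * (ucoef t k * gd k)"
      by (simp add: gd_def)
  qed
  also have "\<dots> = (\<Sum>k\<in>{1..r}. (ucoef t k)^2 * gd k)"
    by (simp add: power2_eq_square algebra_simps)
  finally show ?thesis .
qed

lemma gd_pos: "k \<in> {1..r} \<Longrightarrow> gd k > 0"
  unfolding gd_def by (rule gs_pos)

end


lemma iexp_sum: "finite K \<Longrightarrow> iexp (\<Sum>k\<in>K. f k) = (\<Prod>k\<in>K. iexp (f k))"
  by (simp add: sum_distrib_left exp_sum)

lemma shear_lin:
  fixes t z m :: "nat \<Rightarrow> real"
  shows "(\<Sum>j\<in>{1..r}. t j * shear m C {1..r} z j) =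
    (\<Sum>j\<in>{1..r}. t j * m j) + (\<Sum>k\<in>{1..r}. (t k + (\<Sum>j\<in>{k<..r}. t j * C j k)) * z k)"
proof -
  have sh: "shear m C {1..r} z j = z j + m j + (\<Sum>k\<in>{1..<j}. C j k * z k)" if "j \<in> {1..r}" for j
  proof -
    have "{k \<in> {1..r}. k < j} = {1..<j}" using that by auto
    then show ?thesis using that by (simp add: shear_def)
  qed
  have "(\<Sum>j\<in>{1..r}. t j * shear m C {1..r} z j) =
      (\<Sum>j\<in>{1..r}. t j * z j + t j * m j + (\<Sum>k\<in>{1..<j}. t j * C j k * z k))"
  proof (rule sum.cong[OF refl])
    fix j assume j: "j \<in> {1..r}"
    show "t j * shear m C {1..r} z j = t j * z j + t j * m j + (\<Sum>k\<in>{1..<j}. t j * C j k * z k)"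
      unfolding sh[OF j] by (simp add: algebra_simps sum_distrib_left)
  qed
  also have "\<dots> = (\<Sum>j\<in>{1..r}. t j * z j) + (\<Sum>j\<in>{1..r}. t j * m j) + (\<Sum>j\<in>{1..r}. \<Sum>k\<in>{1..<j}. t j * C j k * z k)"
    by (simp add: sum.distrib)
  also have "(\<Sum>j\<in>{1..r}. \<Sum>k\<in>{1..<j}. t j * C j k * z k) = (\<Sum>k\<in>{1..r}. \<Sum>j\<in>{k<..r}. t j * C j k * z k)"
  proof -
    have "(\<Sum>j\<in>{1..r}. \<Sum>k\<in>{1..<j}. t j * C j k * z k) =
        (\<Sum>(j,k)\<in>Sigma {1..r} (\<lambda>j. {1..<j}). t j * C j k * z k)"
      by (rule sum.Sigma) auto
    also have "\<dots> = (\<Sum>(k,j)\<in>Sigma {1..r} (\<lambda>k. {k<..r}). t j * C j k * z k)"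
      by (rule sum.reindex_bij_witness[where i="\<lambda>(k,j). (j,k)" and j="\<lambda>(j,k). (k,j)"]) auto
    also have "\<dots> = (\<Sum>k\<in>{1..r}. \<Sum>j\<in>{k<..r}. t j * C j k * z k)"
      by (rule sum.Sigma[symmetric]) auto
    finally show ?thesis .
  qed
  finally show ?thesis
    by (simp add: algebra_simps sum.distrib sum_distrib_right sum_distrib_left)
qed

lemma gauss_vec_ac:
  fixes M :: "'a measure" and X :: "nat \<Rightarrow> 'a \<Rightarrow> real" and m :: "nat \<Rightarrow> real" and r :: nat
    and B :: "(nat \<Rightarrow> real) \<Rightarrow> (nat \<Rightarrow> real) \<Rightarrow> real"
  assumes P: "prob_space M" and bl: "bilin r B"
    and Xm: "\<And>j. j \<in> {1..r} \<Longrightarrow> X j \<in> borel_measurable M"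
    and law: "\<And>t. distr M borel (\<lambda>\<omega>. \<Sum>j\<in>{1..r}. t j * X j \<omega>) = gauss (\<Sum>j\<in>{1..r}. t j * m j) (B t t)"
  shows "absolutely_continuous (Pi\<^sub>M {1..r} (\<lambda>_. lborel))
           (distr M (Pi\<^sub>M {1..r} (\<lambda>_. lborel)) (\<lambda>\<omega>. \<lambda>j\<in>{1..r}. X j \<omega>))"
proof -
  interpret P: prob_space M by (rule P)
  interpret bilin r B by (rule bl)
  define L :: "(nat \<Rightarrow> real) measure" where "L = Pi\<^sub>M {1..r} (\<lambda>_. lborel)"
  define dd where "dd j = (if j \<in> {1..r} then gd j else 1)" for j
  have dd_pos: "0 < dd j" for j using gd_pos by (simp add: dd_def)
  have pj: "prob_space (gauss 0 (dd j))" for j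
    using real_distribution_gauss[of "dd j" 0] dd_pos[of j] by (simp add: real_distribution_def)
  interpret G: product_prob_space "\<lambda>j. gauss 0 (dd j)" "{1..r}"
    by (simp add: product_prob_space_def product_sigma_finite_def product_prob_space_axioms_def pj prob_space_imp_sigma_finite)
  define G where "G = Pi\<^sub>M {1..r} (\<lambda>j. gauss 0 (dd j))"
  have sG: "sets G = sets L" unfolding G_def L_def by (rule sets_PiM_cong) auto
  have spG: "space G = space L" using sets_eq_imp_space_eq[OF sG] .
  have sp: "shear m (gcoef B) {1..r} \<in> measurable L L"
    unfolding L_def by (rule shear_measurable) simp
  have shm: "shear m (gcoef B) {1..r} \<in> measurable G L"
    unfolding measurable_cong_sets[OF sG refl] by (rule sp)
  define ref where "ref = distr G L (shear m (gcoef B) {1..r})"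
  define \<mu> where "\<mu> = distr M L (\<lambda>\<omega>. \<lambda>j\<in>{1..r}. X j \<omega>)"
  have Xvm: "(\<lambda>\<omega>. \<lambda>j\<in>{1..r}. X j \<omega>) \<in> measurable M L"
    unfolding L_def by (rule measurable_restrict) (use Xm in simp)
  have Btt: "0 \<le> B t t" for t
    unfolding quad_diag by (intro sum_nonneg mult_nonneg_nonneg) (auto intro!: less_imp_le[OF gd_pos])
  have target: "ft {1..r} \<mu> t = iexp (\<Sum>j\<in>{1..r}. t j * m j) * complex_of_real (exp (- B t t / 2))" for t
  proof -
    have lm: "(\<lambda>\<omega>. \<Sum>j\<in>{1..r}. t j * X j \<omega>) \<in> borel_measurable M"
      using Xm by (intro borel_measurable_sum borel_measurable_times borel_measurable_const) auto
    have "ft {1..r} \<mu> t = (CLINT \<omega>|M. iexp (\<Sum>j\<in>{1..r}. t j * (\<lambda>j\<in>{1..r}. X j \<omega>) j))"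
      unfolding ft_def \<mu>_def
      by (rule integral_distr[OF Xvm]) (simp add: L_def iexp_lin_meas_PiM)
    also have "\<dots> = (CLINT \<omega>|M. iexp (1 * (\<Sum>j\<in>{1..r}. t j * X j \<omega>)))"
      by (rule Bochner_Integration.integral_cong[OF refl]) simp
    also have "\<dots> = char (distr M borel (\<lambda>\<omega>. \<Sum>j\<in>{1..r}. t j * X j \<omega>)) 1"
      unfolding char_def by (rule integral_distr[symmetric, OF lm]) simp
    also have "\<dots> = char (gauss (\<Sum>j\<in>{1..r}. t j * m j) (B t t)) 1" by (simp only: law)
    also have "\<dots> = iexp (\<Sum>j\<in>{1..r}. t j * m j) * complex_of_real (exp (- B t t / 2))"
      using char_gauss[OF Btt[of t], of "\<Sum>j\<in>{1..r}. t j * m j" 1] by simp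
    finally show ?thesis .
  qed
  have reft: "ft {1..r} ref t = iexp (\<Sum>j\<in>{1..r}. t j * m j) * complex_of_real (exp (- B t t / 2))" for t
  proof -
    have "ft {1..r} ref t = (CLINT z|G. iexp (\<Sum>j\<in>{1..r}. t j * shear m (gcoef B) {1..r} z j))"
      unfolding ft_def ref_def
      by (rule integral_distr[OF shm]) (simp add: L_def iexp_lin_meas_PiM)
    also have "\<dots> = (CLINT z|G. iexp (\<Sum>j\<in>{1..r}. t j * m j) * (\<Prod>k\<in>{1..r}. iexp (ucoef t k * z k)))"
    proof (rule Bochner_Integration.integral_cong[OF refl])
      fix z
      have "iexp (\<Sum>j\<in>{1..r}. t j * shear m (gcoef B) {1..r} z j) =
          iexp ((\<Sum>j\<in>{1..r}. t j * m j) + (\<Sum>k\<in>{1..r}. ucoef t k * z k))"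
        by (simp only: shear_lin ucoef_def)
      also have "\<dots> = iexp (\<Sum>j\<in>{1..r}. t j * m j) * iexp (\<Sum>k\<in>{1..r}. ucoef t k * z k)"
        by (simp add: exp_add[symmetric] distrib_left)
      also have "iexp (\<Sum>k\<in>{1..r}. ucoef t k * z k) = (\<Prod>k\<in>{1..r}. iexp (ucoef t k * z k))"
        by (rule iexp_sum) simp
      finally show "iexp (\<Sum>j\<in>{1..r}. t j * shear m (gcoef B) {1..r} z j) =
          iexp (\<Sum>j\<in>{1..r}. t j * m j) * (\<Prod>k\<in>{1..r}. iexp (ucoef t k * z k))" .
    qed
    also have "\<dots> = iexp (\<Sum>j\<in>{1..r}. t j * m j) * (CLINT z|G. (\<Prod>k\<in>{1..r}. iexp (ucoef t k * z k)))"
      by (rule integral_mult_right_zero)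
    also have "(CLINT z|G. (\<Prod>k\<in>{1..r}. iexp (ucoef t k * z k))) = (\<Prod>k\<in>{1..r}. char (gauss 0 (dd k)) (ucoef t k))"
      unfolding G_def char_def
    proof (rule G.product_integral_prod)
      fix k
      show "integrable (gauss 0 (dd k)) (\<lambda>x. iexp (ucoef t k * x))"
        by (rule prob_space.integrable_iexp[OF pj]) simp_all
    qed simp
    also have "\<dots> = (\<Prod>k\<in>{1..r}. complex_of_real (exp (- gd k * (ucoef t k)^2 / 2)))"
    proof (rule prod.cong[OF refl])
      fix k assume k: "k \<in> {1..r}"
      have "char (gauss 0 (dd k)) (ucoef t k) = iexp (ucoef t k * 0) * complex_of_real (exp (- dd k * (ucoef t k)^2 / 2))"
        by (rule char_gauss[OF less_imp_le[OF dd_pos]])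
      then show "char (gauss 0 (dd k)) (ucoef t k) = complex_of_real (exp (- gd k * (ucoef t k)^2 / 2))"
        using k by (simp add: dd_def)
    qed
    also have "\<dots> = complex_of_real (exp (- B t t / 2))"
    proof -
      have "(\<Prod>k\<in>{1..r}. complex_of_real (exp (- gd k * (ucoef t k)^2 / 2))) =
          complex_of_real (exp (\<Sum>k\<in>{1..r}. - gd k * (ucoef t k)^2 / 2))"
        by (simp add: exp_sum)
      also have "(\<Sum>k\<in>{1..r}. - gd k * (ucoef t k)^2 / 2) = - B t t / 2"
        unfolding quad_diag by (simp add: sum_negf sum_divide_distrib[symmetric] algebra_simps)
      finally show ?thesis .
    qed
    finally show ?thesis .
  qed
  have eq: "\<mu> = ref"
  proof (rule ft_unique[of "{1..r}"])
    show "finite_measure \<mu>" unfolding \<mu>_def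
      by (rule finite_measure.finite_measure_distr[OF P.finite_measure_axioms Xvm])
    show "finite_measure ref" unfolding ref_def
      by (rule finite_measure.finite_measure_distr[OF _ shm]) (unfold G_def, rule prob_space.axioms(1)[OF G.P.prob_space_axioms])
    show "sets \<mu> = sets (Pi\<^sub>M {1..r} (\<lambda>_. lborel))" by (simp add: \<mu>_def L_def)
    show "sets ref = sets (Pi\<^sub>M {1..r} (\<lambda>_. lborel))" by (simp add: ref_def L_def)
    show "ft {1..r} \<mu> t = ft {1..r} ref t" for t using target reft by simp
  qed simp
  have ac: "absolutely_continuous L G"
    unfolding L_def G_def by (rule PiM_gauss_abs_cont) (simp_all add: dd_pos)
  have "absolutely_continuous L ref"
    unfolding absolutely_continuous_def
  proof
    fix N assume N: "N \<in> null_sets L"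
    have "shear m (gcoef B) {1..r} -` N \<inter> space L \<in> null_sets L"
    proof -
      have "N \<in> null_sets (distr L L (shear m (gcoef B) {1..r}))"
        using N shear_preserves[of "{1..r}" m "gcoef B"] by (simp add: L_def)
      then show ?thesis using null_sets_distr_iff[OF sp] by simp
    qed
    then have "shear m (gcoef B) {1..r} -` N \<inter> space G \<in> null_sets G"
      using ac spG unfolding absolutely_continuous_def by auto
    then show "N \<in> null_sets ref"
      unfolding ref_def using null_sets_distr_iff[OF shm] N by auto
  qed
  then show ?thesis using eq by (simp add: \<mu>_def L_def)
qed


lemma deriv_zero_outside:
  fixes f :: "real \<Rightarrow> real"
  assumes f0: "\<And>x. x \<notin> {a..b} \<Longrightarrow> f x = 0" and x: "x \<notin> {a..b}"
  shows "deriv f x = 0"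
proof -
  have "(f has_real_derivative 0) (at x)"
  proof (cases "x < a")
    case True
    have "((\<lambda>_. 0) has_real_derivative 0) (at x)" by simp
    then show ?thesis
      by (rule has_field_derivative_transform_within_open[where S="{..<a}"]) (use True f0 in auto)
  next
    case False
    then have xb: "x > b" using x by auto
    have "((\<lambda>_. 0) has_real_derivative 0) (at x)" by simp
    then show ?thesis
      by (rule has_field_derivative_transform_within_open[where S="{b<..}"]) (use xb f0 in auto)
  qed
  then show ?thesis by (rule DERIV_imp_deriv)
qed

lemma test_fun_deriv:
  assumes "test_fun \<phi>"
  shows "test_fun ((deriv ^^ d) \<phi>)"
proof -
  obtain a b where ab: "0 < a" "a \<le> b" "\<And>x. x \<notin> {a..b} \<Longrightarrow> \<phi> x = 0"
    using assms unfolding test_fun_def by blast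
  have diff: "\<And>k x. ((deriv ^^ k) \<phi>) differentiable (at x)"
    using assms unfolding test_fun_def by blast
  have z: "\<And>x. x \<notin> {a..b} \<Longrightarrow> (deriv ^^ d) \<phi> x = 0"
  proof (induction d)
    case 0 then show ?case using ab by simp
  next
    case (Suc d)
    then show ?case using deriv_zero_outside[of a b "(deriv ^^ d) \<phi>"] by simp
  qed
  show ?thesis unfolding test_fun_def
  proof (intro conjI allI)
    fix k x
    show "((deriv ^^ k) ((deriv ^^ d) \<phi>)) differentiable (at x)"
      using diff[of "k + d" x] by (simp add: funpow_add)
  next
    show "\<exists>a b. 0 < a \<and> a \<le> b \<and> (\<forall>x. x \<notin> {a..b} \<longrightarrow> (deriv ^^ d) \<phi> x = 0)"
      using ab z by blast
  qed
qed

lemma psd_kernel: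
  fixes G :: "nat \<Rightarrow> nat \<Rightarrow> real" and n :: nat
  assumes psd: "\<And>x. 0 \<le> (\<Sum>d<n. \<Sum>d'<n. x d * x d' * G d d')"
    and sym: "\<And>d d'. G d d' = G d' d"
    and zero: "(\<Sum>d<n. \<Sum>d'<n. x d * x d' * G d d') = 0"
    and i: "i < n"
  shows "(\<Sum>d<n. G i d * x d) = 0"
proof -
  define Q where "Q y = (\<Sum>d<n. \<Sum>d'<n. y d * y d' * G d d')" for y
  define b where "b = (\<Sum>d<n. G i d * x d)"
  define y where "y = (\<lambda>d. if d = i then 1 else 0 :: real)"
  have Qy: "Q y = G i i"
  proof -
    have e: "y d * y d' * G d d' = (if d' = i then (if d = i then G i i else 0) else 0)" for d d'
      by (simp add: y_def)
    show ?thesis unfolding Q_def e using i by (simp add: sum.delta)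
  qed
  have expand: "Q (\<lambda>d. x d + s * y d) = Q x + 2 * s * b + s^2 * Q y" for s
  proof -
    have "Q (\<lambda>d. x d + s * y d) = (\<Sum>d<n. \<Sum>d'<n. x d * x d' * G d d' + s * (y d * x d' * G d d') + s * (x d * y d' * G d d') + s^2 * (y d * y d' * G d d'))"
      unfolding Q_def by (intro sum.cong refl) (simp add: algebra_simps power2_eq_square)
    also have "\<dots> = Q x + s * (\<Sum>d<n. \<Sum>d'<n. y d * x d' * G d d') + s * (\<Sum>d<n. \<Sum>d'<n. x d * y d' * G d d') + s^2 * Q y"
      unfolding Q_def by (simp add: sum.distrib sum_distrib_left)
    also have "(\<Sum>d<n. \<Sum>d'<n. y d * x d' * G d d') = b"
    proof -
      have e2: "y d * x d' * G d d' = (if d = i then x d' * G i d' else 0)" for d d'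
        by (simp add: y_def)
      show ?thesis unfolding e2 b_def using i
        by (subst sum.swap) (simp add: sum.delta mult.commute)
    qed
    also have "(\<Sum>d<n. \<Sum>d'<n. x d * y d' * G d d') = b"
    proof -
      have e3: "x d * y d' * G d d' = (if d' = i then x d * G d i else 0)" for d d'
        by (simp add: y_def)
      have "(\<Sum>d<n. \<Sum>d'<n. x d * y d' * G d d') = (\<Sum>d<n. x d * G d i)"
        unfolding e3 using i by (simp add: sum.delta)
      also have "\<dots> = b" unfolding b_def by (intro sum.cong refl) (simp add: sym mult.commute)
      finally show ?thesis .
    qed
    finally show ?thesis by simp
  qed
  have Q0: "Q x = 0" using zero by (simp add: Q_def)
  have nn: "0 \<le> 2 * s * b + s^2 * Q y" for s
    using psd[of "\<lambda>d. x d + s * y d"] expand[of s] Q0 by (simp add: Q_def)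
  have Qy0: "0 \<le> Q y" using psd[of y] by (simp add: Q_def)
  define s where "s = - b / (Q y + 1)"
  have hQ: "Q y + 1 \<noteq> 0" using Qy0 by simp
  have "0 \<le> 2 * s * b + s^2 * Q y" by (rule nn)
  moreover have "(Q y + 1)^2 * (2 * s * b + s^2 * Q y) = b^2 * (- Q y - 2)"
  proof -
    have sc: "s * (Q y + 1) = - b" using hQ by (simp add: s_def)
    have "(Q y + 1)^2 * (2 * s * b + s^2 * Q y) = 2 * b * (s * (Q y + 1)) * (Q y + 1) + (s * (Q y + 1))^2 * Q y"
      by (simp add: power2_eq_square algebra_simps)
    also have "\<dots> = b^2 * (- Q y - 2)" unfolding sc by (simp add: power2_eq_square algebra_simps)
    finally show ?thesis .
  qed
  ultimately have "0 \<le> b^2 * (- Q y - 2)"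
    by (metis zero_le_power2 mult_nonneg_nonneg)
  moreover have "- Q y - 2 < 0" using Qy0 by simp
  ultimately have "b^2 = 0"
  proof -
    assume h1: "0 \<le> b^2 * (- Q y - 2)" and h2: "- Q y - 2 < 0"
    show "b^2 = 0"
    proof (rule ccontr)
      assume "b^2 \<noteq> 0"
      then have "b^2 > 0" by simp
      then have "b^2 * (- Q y - 2) < 0" using h2 by (rule mult_pos_neg)
      then show False using h1 by simp
    qed
  qed
  then have "b = 0" by simp
  then show ?thesis by (simp add: b_def)
qed


context
  fixes M :: "'a measure" and m q1 r :: nat
    and c :: "nat \<Rightarrow> (real \<Rightarrow> real) \<Rightarrow> real"
    and \<xi> :: "nat \<Rightarrow> 'a \<Rightarrow> (real \<Rightarrow> real) \<Rightarrow> real"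
    and \<rho> :: "nat \<Rightarrow> nat \<Rightarrow> real"
    and v :: "nat \<Rightarrow> 'a \<Rightarrow> (real \<Rightarrow> real) \<Rightarrow> real"
    and \<phi> :: "real \<Rightarrow> real"
  assumes P: "prob_space M"
    and q1: "q1 \<ge> 1"
    and WN: "white_noise_m M m \<xi>"
    and V: "\<forall>j\<in>{1..q1}. \<forall>\<omega>\<in>space M. \<forall>\<psi>. test_fun \<psi> \<longrightarrow>
           v j \<omega> \<psi> = (\<Sum>k=j..q1. c k ((deriv ^^ (k - j)) \<psi>)
                         + (\<Sum>l=1..m. \<rho> k l * \<xi> l \<omega> ((deriv ^^ (k - j)) \<psi>)))"
    and r: "r \<in> {1..q1}" and rho_r: "L2_set (\<rho> r) {1..m} \<noteq> 0"
    and rho_hi: "\<forall>k\<in>{r<..q1}. L2_set (\<rho> k) {1..m} = 0"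
    and phi: "\<phi> \<in> E_set q1"
begin

interpretation P: prob_space M by (rule P)

definition D :: "nat \<Rightarrow> real \<Rightarrow> real" where "D d = (deriv ^^ d) \<phi>"
definition mv :: "nat \<Rightarrow> real" where "mv j = (\<Sum>k=j..q1. c k (D (k - j)))"
definition rc :: "nat \<Rightarrow> nat \<Rightarrow> nat \<Rightarrow> real" where "rc p d l = (if p + d \<le> q1 then \<rho> (p + d) l else 0)"
definition cs :: "(nat \<Rightarrow> real) \<Rightarrow> nat \<Rightarrow> nat \<Rightarrow> real" where "cs t l d = (\<Sum>p\<in>{1..r}. t p * rc p d l)"
definition Gm :: "nat \<Rightarrow> nat \<Rightarrow> real" where "Gm d d' = integral {0<..} (\<lambda>x. D d x * D d' x)"
definition Bf :: "(nat \<Rightarrow> real) \<Rightarrow> (nat \<Rightarrow> real) \<Rightarrow> real" where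
  "Bf u w = (\<Sum>l\<in>{1..m}. \<Sum>d<q1. \<Sum>d'<q1. cs u l d * cs w l d' * Gm d d')"
definition Y :: "(nat \<Rightarrow> real) \<Rightarrow> nat \<Rightarrow> 'a \<Rightarrow> real" where
  "Y t l \<omega> = (\<Sum>d<q1. cs t l d * \<xi> l \<omega> (D d))"

lemma tf_phi: "test_fun \<phi>" using phi by (simp add: E_set_def)

lemma tfD: "test_fun (D d)" unfolding D_def by (rule test_fun_deriv[OF tf_phi])

lemma wn_l: "l \<in> {1..m} \<Longrightarrow> white_noise M (\<xi> l)"
  using WN by (simp add: white_noise_m_def)

lemma meas_xi: "l \<in> {1..m} \<Longrightarrow> (\<lambda>\<omega>. \<xi> l \<omega> (D d)) \<in> borel_measurable M"
  using wn_l[of l] tfD[of d] by (simp add: white_noise_def)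

lemma m_pos: "1 \<le> m"
proof (rule ccontr)
  assume "\<not> 1 \<le> m"
  then have "{1..m} = {}" by auto
  then show False using rho_r by simp
qed

lemma rho_zero: "k \<in> {r<..q1} \<Longrightarrow> l \<in> {1..m} \<Longrightarrow> \<rho> k l = 0"
  using rho_hi L2_set_eq_0_iff[of "{1..m}" "\<rho> k"] by auto

lemma sum_shift_rc:
  assumes j: "j \<in> {1..q1}"
  shows "(\<Sum>k=j..q1. f k (k - j)) = (\<Sum>d<q1. (if j + d \<le> q1 then f (j + d) d else 0))"
proof -
  have "(\<Sum>k=j..q1. f k (k - j)) = (\<Sum>d\<in>{..q1 - j}. f (j + d) d)"
    by (rule sum.reindex_bij_witness[where i="\<lambda>d. j + d" and j="\<lambda>k. k - j"]) (use j in auto)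
  also have "{..q1 - j} = {d\<in>{..<q1}. j + d \<le> q1}" using j by auto
  also have "(\<Sum>d\<in>{d\<in>{..<q1}. j + d \<le> q1}. f (j + d) d) = (\<Sum>d<q1. (if j + d \<le> q1 then f (j + d) d else 0))"
    by (rule sum.inter_filter) simp
  finally show ?thesis .
qed

lemma v_repr:
  assumes j: "j \<in> {1..q1}" and \<omega>: "\<omega> \<in> space M"
  shows "v j \<omega> \<phi> = mv j + (\<Sum>l\<in>{1..m}. \<Sum>d<q1. rc j d l * \<xi> l \<omega> (D d))"
proof -
  have "v j \<omega> \<phi> = (\<Sum>k=j..q1. c k (D (k - j)) + (\<Sum>l=1..m. \<rho> k l * \<xi> l \<omega> (D (k - j))))"
    using V j \<omega> tf_phi by (simp add: D_def)
  also have "\<dots> = mv j + (\<Sum>k=j..q1. \<Sum>l=1..m. \<rho> k l * \<xi> l \<omega> (D (k - j)))"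
    by (simp add: sum.distrib mv_def)
  also have "(\<Sum>k=j..q1. \<Sum>l=1..m. \<rho> k l * \<xi> l \<omega> (D (k - j))) =
      (\<Sum>d<q1. (if j + d \<le> q1 then (\<Sum>l=1..m. \<rho> (j + d) l * \<xi> l \<omega> (D d)) else 0))"
    using sum_shift_rc[OF j, of "\<lambda>k d. \<Sum>l=1..m. \<rho> k l * \<xi> l \<omega> (D d)"] by simp
  also have "\<dots> = (\<Sum>d<q1. \<Sum>l\<in>{1..m}. rc j d l * \<xi> l \<omega> (D d))"
    by (rule sum.cong[OF refl]) (simp add: rc_def)
  also have "\<dots> = (\<Sum>l\<in>{1..m}. \<Sum>d<q1. rc j d l * \<xi> l \<omega> (D d))"
    by (rule sum.swap)
  finally show ?thesis .
qed

lemma lin_repr: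
  assumes \<omega>: "\<omega> \<in> space M"
  shows "(\<Sum>j\<in>{1..r}. t j * v j \<omega> \<phi>) = (\<Sum>j\<in>{1..r}. t j * mv j) + (\<Sum>l\<in>{1..m}. Y t l \<omega>)"
proof -
  have "(\<Sum>j\<in>{1..r}. t j * v j \<omega> \<phi>) = (\<Sum>j\<in>{1..r}. t j * (mv j + (\<Sum>l\<in>{1..m}. \<Sum>d<q1. rc j d l * \<xi> l \<omega> (D d))))"
    by (rule sum.cong[OF refl]) (use r \<omega> in \<open>simp add: v_repr\<close>)
  also have "\<dots> = (\<Sum>j\<in>{1..r}. t j * mv j) + (\<Sum>j\<in>{1..r}. \<Sum>l\<in>{1..m}. \<Sum>d<q1. t j * rc j d l * \<xi> l \<omega> (D d))"
    by (simp add: algebra_simps sum.distrib sum_distrib_left)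
  also have "(\<Sum>j\<in>{1..r}. \<Sum>l\<in>{1..m}. \<Sum>d<q1. t j * rc j d l * \<xi> l \<omega> (D d)) = (\<Sum>l\<in>{1..m}. Y t l \<omega>)"
  proof -
    have "(\<Sum>j\<in>{1..r}. \<Sum>l\<in>{1..m}. \<Sum>d<q1. t j * rc j d l * \<xi> l \<omega> (D d)) =
        (\<Sum>l\<in>{1..m}. \<Sum>j\<in>{1..r}. \<Sum>d<q1. t j * rc j d l * \<xi> l \<omega> (D d))"
      by (rule sum.swap)
    also have "\<dots> = (\<Sum>l\<in>{1..m}. \<Sum>d<q1. \<Sum>j\<in>{1..r}. t j * rc j d l * \<xi> l \<omega> (D d))"
      by (rule sum.cong[OF refl]) (rule sum.swap)
    also have "\<dots> = (\<Sum>l\<in>{1..m}. Y t l \<omega>)"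
      by (simp add: Y_def cs_def sum_distrib_right)
    finally show ?thesis .
  qed
  finally show ?thesis .
qed

lemma wn_var:
  assumes l: "l \<in> {1..m}"
  shows "centred_gaussian M (\<lambda>\<omega>. \<Sum>d<q1. x d * \<xi> l \<omega> (D d)) (\<Sum>d<q1. \<Sum>d'<q1. x d * x d' * Gm d d')"
proof -
  let ?ps = "map D [0..<q1]" and ?cs = "map x [0..<q1]"
  have "centred_gaussian M (\<lambda>\<omega>. \<Sum>i<length ?ps. ?cs ! i * \<xi> l \<omega> (?ps ! i))
          (\<Sum>i<length ?ps. \<Sum>j<length ?ps. ?cs ! i * ?cs ! j * integral {0<..} (\<lambda>y. (?ps ! i) y * (?ps ! j) y))"
  proof -
    have H: "\<forall>(\<phi>s :: (real \<Rightarrow> real) list) (cs :: real list).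
        length cs = length \<phi>s \<longrightarrow> (\<forall>\<phi>\<in>set \<phi>s. test_fun \<phi>) \<longrightarrow>
        centred_gaussian M (\<lambda>\<omega>. \<Sum>i<length \<phi>s. cs ! i * \<xi> l \<omega> (\<phi>s ! i))
          (\<Sum>i<length \<phi>s. \<Sum>j<length \<phi>s.
              cs ! i * cs ! j * integral {0<..} (\<lambda>x. (\<phi>s ! i) x * (\<phi>s ! j) x))"
      using wn_l[OF l] unfolding white_noise_def by blast
    show ?thesis by (rule H[rule_format, of ?cs ?ps]) (auto intro: tfD)
  qed
  moreover have "(\<lambda>\<omega>. \<Sum>i<length ?ps. ?cs ! i * \<xi> l \<omega> (?ps ! i)) = (\<lambda>\<omega>. \<Sum>d<q1. x d * \<xi> l \<omega> (D d))"
    by (rule ext, rule sum.cong) auto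
  moreover have "(\<Sum>i<length ?ps. \<Sum>j<length ?ps. ?cs ! i * ?cs ! j * integral {0<..} (\<lambda>y. (?ps ! i) y * (?ps ! j) y)) =
      (\<Sum>d<q1. \<Sum>d'<q1. x d * x d' * Gm d d')"
    by (auto intro!: sum.cong simp: Gm_def)
  ultimately show ?thesis by simp
qed

lemma G_psd: "0 \<le> (\<Sum>d<q1. \<Sum>d'<q1. x d * x d' * Gm d d')"
  using wn_var[of 1 x] m_pos by (simp add: centred_gaussian_def)

lemma Gm_sym: "Gm d d' = Gm d' d"
  unfolding Gm_def by (simp add: mult.commute)

lemma G_pd:
  assumes z: "(\<Sum>d<q1. \<Sum>d'<q1. x d * x d' * Gm d d') = 0" and d: "d < q1"
  shows "x d = 0"
proof -
  have k: "(\<Sum>j<q1. Gm i j * x j) = 0" if "i < q1" for i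
    by (rule psd_kernel[OF G_psd Gm_sym z that])
  define a where "a j = (-1::real) ^ j * x j" for j
  have "\<forall>i<q1. (\<Sum>j<q1. cov_deriv \<phi> i j * a j) = 0"
  proof (intro allI impI)
    fix i assume i: "i < q1"
    have "(\<Sum>j<q1. cov_deriv \<phi> i j * a j) = (\<Sum>j<q1. (-1) ^ i * (Gm i j * x j))"
    proof (rule sum.cong[OF refl])
      fix j
      have "(-1::real) ^ (i + j) * (-1) ^ j = (-1) ^ i * ((-1) ^ j * (-1) ^ j)"
        by (simp add: power_add)
      also have "(-1::real) ^ j * (-1) ^ j = 1" by (simp add: power_mult_distrib[symmetric])
      finally have "(-1::real) ^ (i + j) * (-1) ^ j = (-1) ^ i" by simp
      then show "cov_deriv \<phi> i j * a j = (-1) ^ i * (Gm i j * x j)"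
        unfolding cov_deriv_def a_def Gm_def D_def
        by (metis (no_types, lifting) mult.assoc mult.left_commute)
    qed
    also have "\<dots> = (-1) ^ i * (\<Sum>j<q1. Gm i j * x j)" by (simp add: sum_distrib_left)
    also have "\<dots> = 0" using k[OF i] by simp
    finally show "(\<Sum>j<q1. cov_deriv \<phi> i j * a j) = 0" .
  qed
  then have "\<forall>j<q1. a j = 0" using phi by (simp add: E_set_def)
  then show ?thesis using d by (simp add: a_def)
qed


lemma cs_lin: "cs (\<lambda>p. a * w p + b * w' p) l d = a * cs w l d + b * cs w' l d"
  by (simp add: cs_def algebra_simps sum.distrib sum_distrib_left)

lemma Bf_nonneg: "0 \<le> Bf t t"
  unfolding Bf_def by (intro sum_nonneg G_psd)

lemma Bf_pd:
  assumes ex: "\<exists>p\<in>{1..r}. u p \<noteq> 0"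
  shows "0 < Bf u u"
proof (rule ccontr)
  assume "\<not> 0 < Bf u u"
  then have "Bf u u = 0" using Bf_nonneg[of u] by simp
  then have "\<forall>l\<in>{1..m}. (\<Sum>d<q1. \<Sum>d'<q1. cs u l d * cs u l d' * Gm d d') = 0"
    unfolding Bf_def by (subst (asm) sum_nonneg_eq_0_iff) (auto intro: G_psd)
  then have csz: "\<And>l d. l \<in> {1..m} \<Longrightarrow> d < q1 \<Longrightarrow> cs u l d = 0"
    using G_pd by blast
  define S where "S = {p\<in>{1..r}. u p \<noteq> 0}"
  have Sne: "S \<noteq> {}" "finite S" using ex by (auto simp: S_def)
  define p0 where "p0 = Min S"
  have p0S: "p0 \<in> S" using Sne by (simp add: p0_def)
  have p0min: "\<And>p. p \<in> S \<Longrightarrow> p0 \<le> p" using Sne by (simp add: p0_def)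
  have p0r: "p0 \<in> {1..r}" "u p0 \<noteq> 0" using p0S by (auto simp: S_def)
  define d0 where "d0 = r - p0"
  have d0q: "d0 < q1" using p0r r by (auto simp: d0_def)
  have "\<rho> r l = 0" if l: "l \<in> {1..m}" for l
  proof -
    have "cs u l d0 = u p0 * \<rho> r l"
    proof -
      have "cs u l d0 = u p0 * rc p0 d0 l + (\<Sum>p\<in>{1..r} - {p0}. u p * rc p d0 l)"
        unfolding cs_def using p0r by (subst sum.remove[of _ p0]) auto
      also have "(\<Sum>p\<in>{1..r} - {p0}. u p * rc p d0 l) = 0"
      proof (rule sum.neutral, rule ballI)
        fix p assume p: "p \<in> {1..r} - {p0}"
        show "u p * rc p d0 l = 0"
        proof (cases "p < p0")
          case True
          then have "p \<notin> S" using p0min by force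
          then have "u p = 0" using p by (auto simp: S_def)
          then show ?thesis by simp
        next
          case False
          then have "p > p0" using p by auto
          then have "p + d0 > r" using p0r by (auto simp: d0_def)
          then show ?thesis using rho_zero[of "p + d0" l] l by (auto simp: rc_def)
        qed
      qed
      also have "rc p0 d0 l = \<rho> r l" using p0r r by (auto simp: rc_def d0_def)
      finally show ?thesis by simp
    qed
    then show ?thesis using csz[OF l d0q] p0r by simp
  qed
  then have "L2_set (\<rho> r) {1..m} = 0" by (simp add: L2_set_eq_0_iff)
  then show False using rho_r by simp
qed

lemma Bf_bilin: "bilin r Bf"
proof
  show "Bf u w = Bf w u" for u w
    unfolding Bf_def
  proof (rule sum.cong[OF refl])
    fix l
    have "(\<Sum>d<q1. \<Sum>d'<q1. cs u l d * cs w l d' * Gm d d') = (\<Sum>d'<q1. \<Sum>d<q1. cs u l d * cs w l d' * Gm d d')"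
      by (rule sum.swap)
    also have "\<dots> = (\<Sum>d'<q1. \<Sum>d<q1. cs w l d' * cs u l d * Gm d' d)"
      by (simp add: Gm_sym mult.commute mult.left_commute)
    finally show "(\<Sum>d<q1. \<Sum>d'<q1. cs u l d * cs w l d' * Gm d d') = (\<Sum>d<q1. \<Sum>d'<q1. cs w l d * cs u l d' * Gm d d')" .
  qed
  show "Bf u (\<lambda>p. a * w p + b * w' p) = a * Bf u w + b * Bf u w'" for u w w' a b
    by (simp add: Bf_def cs_lin algebra_simps sum.distrib sum_distrib_left)
  show "(\<exists>p\<in>{1..r}. u p \<noteq> 0) \<Longrightarrow> 0 < Bf u u" for u by (rule Bf_pd)
  show "(\<forall>p\<in>{1..r}. u p = u' p) \<Longrightarrow> Bf u w = Bf u' w" for u u' w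
    by (simp add: Bf_def cs_def)
qed

definition sig :: "(nat \<Rightarrow> real) \<Rightarrow> nat \<Rightarrow> real" where
  "sig t l = (\<Sum>d<q1. \<Sum>d'<q1. cs t l d * cs t l d' * Gm d d')"

lemma Y_cg: "l \<in> {1..m} \<Longrightarrow> centred_gaussian M (Y t l) (sig t l)"
  using wn_var[of l "cs t l"] by (simp add: Y_def[abs_def] sig_def)

lemma Y_meas: "l \<in> {1..m} \<Longrightarrow> Y t l \<in> borel_measurable M"
  using Y_cg by (simp add: centred_gaussian_def)

lemma Y_law: "l \<in> {1..m} \<Longrightarrow> distr M borel (Y t l) = gauss 0 (sig t l)"
  using Y_cg by (simp add: centred_gaussian_def gauss_def)

lemma sig_nonneg: "0 \<le> sig t l"
  unfolding sig_def by (rule G_psd)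

lemma Y_indep: "P.indep_vars (\<lambda>_. borel) (Y t) {1..m}"
proof -
  let ?TF = "{\<psi>. test_fun \<psi>}"
  have I0: "P.indep_vars (\<lambda>_. Pi\<^sub>M ?TF (\<lambda>_. borel)) (\<lambda>l \<omega>. restrict (\<xi> l \<omega>) ?TF) {1..m}"
    using WN by (simp add: white_noise_m_def)
  have mf: "(\<lambda>h. \<Sum>d<q1. cs t l d * h (D d)) \<in> borel_measurable (Pi\<^sub>M ?TF (\<lambda>_. borel))" for l
  proof (intro borel_measurable_sum borel_measurable_times borel_measurable_const)
    fix d
    show "(\<lambda>h. h (D d)) \<in> borel_measurable (Pi\<^sub>M ?TF (\<lambda>_. borel))"
      using measurable_component_singleton[of "D d" ?TF "\<lambda>_. borel"] tfD[of d] by simp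
  qed
  have "P.indep_vars (\<lambda>_. borel) (\<lambda>l \<omega>. \<Sum>d<q1. cs t l d * restrict (\<xi> l \<omega>) ?TF (D d)) {1..m}"
    by (rule P.indep_vars_compose2[OF I0]) (rule mf)
  moreover have "(\<lambda>l \<omega>. \<Sum>d<q1. cs t l d * restrict (\<xi> l \<omega>) ?TF (D d)) = Y t"
    by (intro ext) (simp add: Y_def tfD)
  ultimately show ?thesis by simp
qed

lemma Bf_sig: "Bf t t = (\<Sum>l\<in>{1..m}. sig t l)"
  by (simp add: Bf_def sig_def)

lemma law: "distr M borel (\<lambda>\<omega>. \<Sum>j\<in>{1..r}. t j * v j \<omega> \<phi>) = gauss (\<Sum>j\<in>{1..r}. t j * mv j) (Bf t t)"
proof -
  let ?a = "\<Sum>j\<in>{1..r}. t j * mv j"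
  let ?S = "\<lambda>\<omega>. \<Sum>l\<in>{1..m}. Y t l \<omega>"
  have Sm: "?S \<in> borel_measurable M"
    by (rule borel_measurable_sum) (rule Y_meas)
  have Xm: "(\<lambda>\<omega>. ?a + ?S \<omega>) \<in> borel_measurable M"
    using Sm by simp
  have "distr M borel (\<lambda>\<omega>. \<Sum>j\<in>{1..r}. t j * v j \<omega> \<phi>) = distr M borel (\<lambda>\<omega>. ?a + ?S \<omega>)"
  proof (rule distr_cong)
    fix \<omega> assume "\<omega> \<in> space M"
    then show "(\<Sum>j\<in>{1..r}. t j * v j \<omega> \<phi>) = ?a + ?S \<omega>" by (rule lin_repr)
  qed simp_all
  also have "\<dots> = gauss ?a (Bf t t)"
  proof (rule P.distr_eq_gauss[OF Xm Bf_nonneg])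
    fix s :: real
    have "char (distr M borel (\<lambda>\<omega>. ?a + ?S \<omega>)) s = (CLINT \<omega>|M. iexp (s * (?a + ?S \<omega>)))"
      unfolding char_def by (rule integral_distr[OF Xm]) simp
    also have "\<dots> = (CLINT \<omega>|M. iexp (s * ?a) * iexp (s * ?S \<omega>))"
      by (rule Bochner_Integration.integral_cong[OF refl]) (simp add: exp_add[symmetric] algebra_simps)
    also have "\<dots> = iexp (s * ?a) * (CLINT \<omega>|M. iexp (s * ?S \<omega>))"
      by (rule integral_mult_right_zero)
    also have "(CLINT \<omega>|M. iexp (s * ?S \<omega>)) = char (distr M borel ?S) s"
      unfolding char_def by (rule integral_distr[OF Sm, symmetric]) simp
    also have "\<dots> = (\<Prod>l\<in>{1..m}. char (distr M borel (Y t l)) s)"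
      by (rule P.char_distr_sum[OF Y_indep])
    also have "\<dots> = (\<Prod>l\<in>{1..m}. complex_of_real (exp (- sig t l * s^2 / 2)))"
    proof (rule prod.cong[OF refl])
      fix l assume l: "l \<in> {1..m}"
      show "char (distr M borel (Y t l)) s = complex_of_real (exp (- sig t l * s^2 / 2))"
        using char_gauss[OF sig_nonneg[of t l], of 0 s] by (simp add: Y_law[OF l])
    qed
    also have "\<dots> = complex_of_real (exp (- Bf t t * s^2 / 2))"
    proof -
      have "(\<Prod>l\<in>{1..m}. complex_of_real (exp (- sig t l * s^2 / 2))) = complex_of_real (exp (\<Sum>l\<in>{1..m}. - sig t l * s^2 / 2))"
        by (simp add: exp_sum)
      also have "(\<Sum>l\<in>{1..m}. - sig t l * s^2 / 2) = - Bf t t * s^2 / 2"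
        by (simp add: Bf_sig sum_negf sum_divide_distrib[symmetric] sum_distrib_right)
      finally show ?thesis .
    qed
    finally show "char (distr M borel (\<lambda>\<omega>. ?a + ?S \<omega>)) s = iexp (s * ?a) * complex_of_real (exp (- Bf t t * s^2 / 2))" .
  qed
  finally show ?thesis .
qed

lemma v_meas: "j \<in> {1..q1} \<Longrightarrow> (\<lambda>\<omega>. v j \<omega> \<phi>) \<in> borel_measurable M"
proof -
  assume j: "j \<in> {1..q1}"
  have "(\<lambda>\<omega>. mv j + (\<Sum>l\<in>{1..m}. \<Sum>d<q1. rc j d l * \<xi> l \<omega> (D d))) \<in> borel_measurable M"
    by (intro borel_measurable_add borel_measurable_const borel_measurable_sum borel_measurable_times meas_xi) auto
  then show ?thesis
    by (rule measurable_cong[THEN iffD1, rotated]) (simp add: v_repr[OF j])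
qed

theorem main:
  "gaussian_vector M (\<lambda>j \<omega>. v j \<omega> \<phi>) {1..r}
    \<and> absolutely_continuous (Pi\<^sub>M {1..r} (\<lambda>_. lborel))
        (distr M (Pi\<^sub>M {1..r} (\<lambda>_. lborel)) (\<lambda>\<omega>. \<lambda>j\<in>{1..r}. v j \<omega> \<phi>))
    \<and> (\<exists>a :: nat \<Rightarrow> real. AE \<omega> in M. \<forall>j\<in>{r<..q1}. v j \<omega> \<phi> = a j)"
proof (intro conjI)
  show "gaussian_vector M (\<lambda>j \<omega>. v j \<omega> \<phi>) {1..r}"
    unfolding gaussian_vector_def gaussian_rv_def
  proof (intro allI conjI)
    fix t :: "nat \<Rightarrow> real"
    show "(\<lambda>\<omega>. \<Sum>i\<in>{1..r}. t i * v i \<omega> \<phi>) \<in> borel_measurable M"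
      using r by (intro borel_measurable_sum borel_measurable_times borel_measurable_const v_meas) auto
    show "\<exists>\<mu> \<sigma>. 0 \<le> \<sigma> \<and> distr M borel (\<lambda>\<omega>. \<Sum>i\<in>{1..r}. t i * v i \<omega> \<phi>) =
        (if \<sigma> = 0 then return borel \<mu> else density lborel (normal_density \<mu> \<sigma>))"
    proof -
      have L: "distr M borel (\<lambda>\<omega>. \<Sum>i\<in>{1..r}. t i * v i \<omega> \<phi>) = gauss (\<Sum>j\<in>{1..r}. t j * mv j) (Bf t t)"
        by (rule law)
      show ?thesis
        by (rule exI[of _ "\<Sum>j\<in>{1..r}. t j * mv j"], rule exI[of _ "sqrt (Bf t t)"])
           (use L Bf_nonneg[of t] in \<open>simp add: gauss_def\<close>)
    qed
  qed
  show "absolutely_continuous (Pi\<^sub>M {1..r} (\<lambda>_. lborel))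
        (distr M (Pi\<^sub>M {1..r} (\<lambda>_. lborel)) (\<lambda>\<omega>. \<lambda>j\<in>{1..r}. v j \<omega> \<phi>))"
    by (rule gauss_vec_ac[OF P Bf_bilin _ law]) (use r in \<open>auto intro: v_meas\<close>)
  show "\<exists>a :: nat \<Rightarrow> real. AE \<omega> in M. \<forall>j\<in>{r<..q1}. v j \<omega> \<phi> = a j"
  proof (rule exI[of _ mv], rule AE_I2, rule ballI)
    fix \<omega> j assume \<omega>: "\<omega> \<in> space M" and j: "j \<in> {r<..q1}"
    have j1: "j \<in> {1..q1}" using j r by auto
    have "(\<Sum>l\<in>{1..m}. \<Sum>d<q1. rc j d l * \<xi> l \<omega> (D d)) = 0"
    proof (intro sum.neutral ballI)
      fix l d assume l: "l \<in> {1..m}" and d: "d \<in> {..<q1}"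
      show "rc j d l * \<xi> l \<omega> (D d) = 0"
      proof (cases "j + d \<le> q1")
        case True
        then have "j + d \<in> {r<..q1}" using j by auto
        then show ?thesis using rho_zero[OF _ l] by (simp add: rc_def)
      qed (simp add: rc_def)
    qed
    then show "v j \<omega> \<phi> = mv j" using v_repr[OF j1 \<omega>] by simp
  qed
qed

end


theorem proposition4p2:
  fixes M :: "'a measure" and m q1 r :: nat
    and c :: "nat \<Rightarrow> (real \<Rightarrow> real) \<Rightarrow> real"
    and \<xi> :: "nat \<Rightarrow> 'a \<Rightarrow> (real \<Rightarrow> real) \<Rightarrow> real"
    and \<rho> :: "nat \<Rightarrow> nat \<Rightarrow> real"
    and v :: "nat \<Rightarrow> 'a \<Rightarrow> (real \<Rightarrow> real) \<Rightarrow> real"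
    and \<phi> :: "real \<Rightarrow> real"
  assumes "prob_space M"
    and "q1 \<ge> 1"
    and "\<forall>k\<in>{1..q1}. is_distribution (c k)"
    and "white_noise_m M m \<xi>"
    and "\<forall>j\<in>{1..q1}. \<forall>\<omega>\<in>space M. \<forall>\<psi>. test_fun \<psi> \<longrightarrow>
           v j \<omega> \<psi> = (\<Sum>k=j..q1. c k ((deriv ^^ (k - j)) \<psi>)
                         + (\<Sum>l=1..m. \<rho> k l * \<xi> l \<omega> ((deriv ^^ (k - j)) \<psi>)))"
    and "r \<in> {1..q1}" and "L2_set (\<rho> r) {1..m} \<noteq> 0"
    and "\<forall>k\<in>{r<..q1}. L2_set (\<rho> k) {1..m} = 0"
    and "\<phi> \<in> E_set q1"
  shows "gaussian_vector M (\<lambda>j \<omega>. v j \<omega> \<phi>) {1..r}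
    \<and> absolutely_continuous (Pi\<^sub>M {1..r} (\<lambda>_. lborel))
        (distr M (Pi\<^sub>M {1..r} (\<lambda>_. lborel)) (\<lambda>\<omega>. \<lambda>j\<in>{1..r}. v j \<omega> \<phi>))
    \<and> (\<exists>a :: nat \<Rightarrow> real. AE \<omega> in M. \<forall>j\<in>{r<..q1}. v j \<omega> \<phi> = a j)"
  using main[OF assms(1,2,4,5,6,7,8,9)] .

end
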